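(* Let $s,\mu,h_t,\mathbf{V}$ be as below, let $A\in\mathbb{R}^{s\times s}$ and $P\in\mathbb{R}^{s\times s}$ both be weakly positive definite, and let $\mathcal{A},\mathcal{P}:\mathbf{V}\to\mathbf{V}^*$ be defined by $$\langle \mathcal{A}\mathbf{u},\mathbf{v}\rangle=\sum_{i}\langle u_i,v_i\rangle_{L^2}+h_t^{\mu}\sum_{i,j}a_{ij}\langle u_j,v_i\rangle_{H_0^1},\qquad \langle \mathcal{P}\mathbf{u},\mathbf{v}\rangle=\sum_{i}\langle u_i,v_i\rangle_{L^2}+h_t^{\mu}\sum_{i,j}p_{ij}\langle u_j,v_i\rangle_{H_0^1}.$$ Then $\mathcal{P}^{-1}\mathcal{A}:\mathbf{V}\to\mathbf{V}$ is an isomorphism and its condition number $\kappa(\mathcal{P}^{-1}\mathcal{A})=\|\mathcal{P}^{-1}\mathcal{A}\|_{\mathcal{L}(\mathbf{V},\mathbf{V})}\|\mathcal{A}^{-1}\mathcal{P}\|_{\mathcal{L}(\mathbf{V},\mathbf{V})}$ is bounded by a constant depending only on $A$, $P$ and $s$, independent of $h_t>0$. Moreover, if $V_h\subset V$ is any finite-dimensional subspace, $\mathbf{V}_h=V_h^s$, and $\mathcal{A}_h,\mathcal{P}_h:\mathbf{V}_h\to\mathbf{V}_h^*$ are the Galerkin restrictions of $\mathcal{A},\mathcal{P}$ to $\mathbf{V}_h$ (with matrix representations $\mathbb{I}^{s\times s}\otimes M+h_t^{\mu}A\otimes F$ and $\mathbb{I}^{s\times s}\otimes M+h_t^{\mu}P\otimes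 F$, where $M$ and $F$ are the mass and stiffness matrices $M_{\ell m}=\langle\phi_\ell,\phi_m\rangle_{L^2}$, $F_{\ell m}=\langle\phi_m,\phi_\ell\rangle_{H_0^1}$ for a basis $\{\phi_\ell\}$ of $V_h$), then the condition number of $\mathcal{P}_h^{-1}\mathcal{A}_h$ on $(\mathbf{V}_h,\|\cdot\|_{\mathbf{V}})$ is bounded by a constant independent of both $h_t$ and the subspace $V_h$ (in particular of the mesh size $h$).
   Context: A real matrix $A\in\mathbb{R}^{s\times s}$ is called weakly positive definite if there exists a symmetric positive definite matrix $C\in\mathbb{R}^{s\times s}$ such that $CA$ is positive definite, i.e. $x^TCAx>0$ for all nonzero $x\in\mathbb{R}^s$. Let $\Omega\subset\mathbb{R}^d$ be a bounded polygonal domain whose boundary is partitioned into disjoint parts $\partial\Omega_N,\partial\Omega_D$. Let $\alpha,\beta\in L^\infty(\Omega)$ with $\alpha>0$ (bounded below by a positive constant) and $\beta\ge 0$ on $\Omega$. Let $\mu\in\{1,2\}$, $h_t>0$, $s\in\mathbb{N}$. Define $\langle u,v\rangle_{L^2}=\int_\Omega uv$ and $\langle u,v\rangle_{H_0^1}=\int_\Omega(\alpha\nabla u\cdot\nabla v+\beta uv)$, with $\|u\|_{H_0^1}^2=\langle u,u\rangle_{H_0^1}$. Let $V$ be the space of $H^1(\Omega)$ functions vanishing on $\partial\Omega_D$, with norm $\|u\|_V^2=\|u\|_{L^2}^2+h_t^{\mu}\|u\|_{H_0^1}^2$, and $\mathbf{V}=V^s$ with $\|\mathbf{u}\|_{\mathbf{V}}^2=\sum_i\|u_i\|_V^2$;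 $\mathbf{V}^*$ is its dual. In particular this applies when $A$ is the Butcher matrix of an A-stable IRK or IRKN method and $P$ is a weakly positive definite approximation of $A$ (e.g. $P=LD$ or $P=DU$ from the LDU factorization $A=LDU$, when these are weakly positive definite). *)

theory Defs
  imports "HOL-Analysis.Analysis"
begin

definition weakly_pos_def :: "real^'n^'n \<Rightarrow> bool" where
  "weakly_pos_def A \<longleftrightarrow> (\<exists>C::real^'n^'n. transpose C = C
      \<and> (\<forall>x::real^'n. x \<noteq> 0 \<longrightarrow> x \<bullet> (C *v x) > 0)
      \<and> (\<forall>x::real^'n. x \<noteq> 0 \<longrightarrow> x \<bullet> ((C ** A) *v x) > 0))"

text \<open>Abstract setting for the space V with the L2 inner product l2 and the
  H_0^1 inner product h1: V is a real subspace, l2 and h1 are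
  symmetric bilinear on V, l2 is positive definite, h1 positive semidefinite,
  and V is complete w.r.t. the norm sqrt(l2 u u + h1 u u).\<close>
definition sym_bilinear_on :: "'v::real_vector set \<Rightarrow> ('v \<Rightarrow> 'v \<Rightarrow> real) \<Rightarrow> bool" where
  "sym_bilinear_on V b \<longleftrightarrow>
     (\<forall>u\<in>V. \<forall>v\<in>V. b u v = b v u)
   \<and> (\<forall>u\<in>V. \<forall>v\<in>V. \<forall>w\<in>V. b (u + v) w = b u w + b v w)
   \<and> (\<forall>c. \<forall>u\<in>V. \<forall>w\<in>V. b (c *\<^sub>R u) w = c * b u w)"

definition energy_space :: "'v::real_vector set \<Rightarrow> ('v \<Rightarrow> 'v \<Rightarrow> real) \<Rightarrow> ('v \<Rightarrow> 'v \<Rightarrow> real) \<Rightarrow> bool" where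
  "energy_space V l2 h1 \<longleftrightarrow>
     subspace V \<and> sym_bilinear_on V l2 \<and> sym_bilinear_on V h1
   \<and> (\<forall>u\<in>V. u \<noteq> 0 \<longrightarrow> l2 u u > 0)
   \<and> (\<forall>u\<in>V. h1 u u \<ge> 0)
   \<and> (\<forall>x::nat \<Rightarrow> 'v. (\<forall>n. x n \<in> V) \<longrightarrow>
        (\<forall>e>0. \<exists>N. \<forall>m\<ge>N. \<forall>n\<ge>N. sqrt (l2 (x m - x n) (x m - x n) + h1 (x m - x n) (x m - x n)) < e)
        \<longrightarrow> (\<exists>y\<in>V. (\<lambda>n. sqrt (l2 (x n - y) (x n - y) + h1 (x n - y) (x n - y))) \<longlonglongrightarrow> 0))"

text \<open>Product space W^s, s = CARD('n), realised as functions 'n => 'v.\<close>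
definition vecs :: "'v set \<Rightarrow> ('n::finite \<Rightarrow> 'v) set" where
  "vecs W = {u. \<forall>i. u i \<in> W}"

definition normV :: "('v \<Rightarrow> 'v \<Rightarrow> real) \<Rightarrow> ('v \<Rightarrow> 'v \<Rightarrow> real) \<Rightarrow> nat \<Rightarrow> real
                      \<Rightarrow> ('n::finite \<Rightarrow> 'v) \<Rightarrow> real" where
  "normV l2 h1 \<mu> ht u = sqrt (\<Sum>i\<in>UNIV. l2 (u i) (u i) + ht ^ \<mu> * h1 (u i) (u i))"

definition form_op :: "('v::real_vector \<Rightarrow> 'v \<Rightarrow> real) \<Rightarrow> ('v \<Rightarrow> 'v \<Rightarrow> real) \<Rightarrow> nat \<Rightarrow> real
                      \<Rightarrow> real^'n^'n \<Rightarrow> 'v set \<Rightarrow> ('n::finite \<Rightarrow> 'v) \<Rightarrow> (('n \<Rightarrow> 'v) \<Rightarrow> real)" where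
  "form_op l2 h1 \<mu> ht M W u = (\<lambda>v. if v \<in> vecs W then
      (\<Sum>i\<in>UNIV. l2 (u i) (v i)) + ht ^ \<mu> * (\<Sum>i\<in>UNIV. \<Sum>j\<in>UNIV. M $ i $ j * h1 (u j) (v i))
    else 0)"

definition dual_space :: "('v::real_vector \<Rightarrow> 'v \<Rightarrow> real) \<Rightarrow> ('v \<Rightarrow> 'v \<Rightarrow> real) \<Rightarrow> nat \<Rightarrow> real
                      \<Rightarrow> 'v set \<Rightarrow> (('n::finite \<Rightarrow> 'v) \<Rightarrow> real) set" where
  "dual_space l2 h1 \<mu> ht W = {f.
      (\<forall>v. v \<notin> vecs W \<longrightarrow> f v = 0)
    \<and> (\<forall>v\<in>vecs W. \<forall>w\<in>vecs W. f (\<lambda>i. v i + w i) = f v + f w)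
    \<and> (\<forall>c. \<forall>v\<in>vecs W. f (\<lambda>i. c *\<^sub>R v i) = c * f v)
    \<and> (\<exists>K. \<forall>v\<in>vecs W. \<bar>f v\<bar> \<le> K * normV l2 h1 \<mu> ht v)}"

definition bounded_op :: "('v::real_vector \<Rightarrow> 'v \<Rightarrow> real) \<Rightarrow> ('v \<Rightarrow> 'v \<Rightarrow> real) \<Rightarrow> nat \<Rightarrow> real
                      \<Rightarrow> 'v set \<Rightarrow> (('n::finite \<Rightarrow> 'v) \<Rightarrow> ('n \<Rightarrow> 'v)) \<Rightarrow> bool" where
  "bounded_op l2 h1 \<mu> ht W T \<longleftrightarrow>
      T ` vecs W \<subseteq> vecs W
    \<and> (\<forall>v\<in>vecs W. \<forall>w\<in>vecs W. T (\<lambda>i. v i + w i) = (\<lambda>i. T v i + T w i))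
    \<and> (\<forall>c. \<forall>v\<in>vecs W. T (\<lambda>i. c *\<^sub>R v i) = (\<lambda>i. c *\<^sub>R T v i))
    \<and> (\<exists>K. \<forall>v\<in>vecs W. normV l2 h1 \<mu> ht (T v) \<le> K * normV l2 h1 \<mu> ht v)"

definition op_norm :: "('v::real_vector \<Rightarrow> 'v \<Rightarrow> real) \<Rightarrow> ('v \<Rightarrow> 'v \<Rightarrow> real) \<Rightarrow> nat \<Rightarrow> real
                      \<Rightarrow> 'v set \<Rightarrow> (('n::finite \<Rightarrow> 'v) \<Rightarrow> ('n \<Rightarrow> 'v)) \<Rightarrow> real" where
  "op_norm l2 h1 \<mu> ht W T = Inf {K. 0 \<le> K \<and>
      (\<forall>v\<in>vecs W. normV l2 h1 \<mu> ht (T v) \<le> K * normV l2 h1 \<mu> ht v)}"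

definition precond_bound :: "('v::real_vector \<Rightarrow> 'v \<Rightarrow> real) \<Rightarrow> ('v \<Rightarrow> 'v \<Rightarrow> real) \<Rightarrow> nat \<Rightarrow> real
                      \<Rightarrow> real^'n::finite^'n \<Rightarrow> real^'n^'n \<Rightarrow> 'v set \<Rightarrow> real \<Rightarrow> bool" where
  "precond_bound l2 h1 \<mu> ht A P W C \<longleftrightarrow>
    (let Aop = form_op l2 h1 \<mu> ht A W;
         Pop = form_op l2 h1 \<mu> ht P W;
         PinvA = the_inv_into (vecs W) Pop \<circ> Aop;
         AinvP = the_inv_into (vecs W) Aop \<circ> Pop
     in bij_betw Aop (vecs W) (dual_space l2 h1 \<mu> ht W)
      \<and> bij_betw Pop (vecs W) (dual_space l2 h1 \<mu> ht W)
      \<and> bij_betw PinvA (vecs W) (vecs W)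
      \<and> bounded_op l2 h1 \<mu> ht W PinvA
      \<and> bounded_op l2 h1 \<mu> ht W AinvP
      \<and> (\<forall>u\<in>vecs W. AinvP (PinvA u) = u)
      \<and> op_norm l2 h1 \<mu> ht W PinvA * op_norm l2 h1 \<mu> ht W AinvP \<le> C)"

end

theory Submission
  imports Defs
begin


locale psdf =
  fixes X :: "'a::real_vector set" and b :: "'a \<Rightarrow> 'a \<Rightarrow> real"
  assumes sub: "subspace X" and sb: "sym_bilinear_on X b"
    and psd: "\<And>u. u \<in> X \<Longrightarrow> b u u \<ge> 0"
begin

lemma symm: "u \<in> X \<Longrightarrow> v \<in> X \<Longrightarrow> b u v = b v u"
  using sb unfolding sym_bilinear_on_def by blast
lemma addL: "u \<in> X \<Longrightarrow> v \<in> X \<Longrightarrow> w \<in> X \<Longrightarrow> b (u + v) w = b u w + b v w"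
  using sb unfolding sym_bilinear_on_def by blast
lemma scL: "u \<in> X \<Longrightarrow> w \<in> X \<Longrightarrow> b (c *\<^sub>R u) w = c * b u w"
  using sb unfolding sym_bilinear_on_def by blast
lemma inX: "u \<in> X \<Longrightarrow> v \<in> X \<Longrightarrow> u + v \<in> X" "u \<in> X \<Longrightarrow> c *\<^sub>R u \<in> X"
  "u \<in> X \<Longrightarrow> v \<in> X \<Longrightarrow> u - v \<in> X" "0 \<in> X" "u \<in> X \<Longrightarrow> - u \<in> X"
  using sub by (auto simp: subspace_add subspace_scale subspace_diff subspace_0 subspace_neg)
lemma addR: "u \<in> X \<Longrightarrow> v \<in> X \<Longrightarrow> w \<in> X \<Longrightarrow> b w (u + v) = b w u + b w v"
  using addL symm inX by metis
lemma scR: "u \<in> X \<Longrightarrow> w \<in> X \<Longrightarrow> b w (c *\<^sub>R u) = c * b w u"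
  using scL symm inX by metis
lemma diffL: "u \<in> X \<Longrightarrow> v \<in> X \<Longrightarrow> w \<in> X \<Longrightarrow> b (u - v) w = b u w - b v w"
proof -
  assume a: "u \<in> X" "v \<in> X" "w \<in> X"
  have "b u w = b ((u - v) + v) w" by simp
  also have "\<dots> = b (u - v) w + b v w" using a inX by (intro addL) auto
  finally show ?thesis by simp
qed
lemma diffR: "u \<in> X \<Longrightarrow> v \<in> X \<Longrightarrow> w \<in> X \<Longrightarrow> b w (u - v) = b w u - b w v"
  using diffL symm inX by metis
lemma zeroL: "w \<in> X \<Longrightarrow> b 0 w = 0"
  using scL[of 0 w 0] inX by simp
lemma zeroR: "w \<in> X \<Longrightarrow> b w 0 = 0"
  using zeroL symm inX by metis
lemma sumL: "finite I \<Longrightarrow> (\<And>i. i \<in> I \<Longrightarrow> f i \<in> X) \<Longrightarrow> w \<in> X \<Longrightarrow>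
   b (\<Sum>i\<in>I. f i) w = (\<Sum>i\<in>I. b (f i) w)"
proof (induction I rule: finite_induct)
  case empty then show ?case by (simp add: zeroL)
next
  case (insert x F)
  have "(\<Sum>i\<in>F. f i) \<in> X" using insert sub by (intro subspace_sum) auto
  then show ?case using insert by (simp add: addL)
qed
lemma sumR: "finite I \<Longrightarrow> (\<And>i. i \<in> I \<Longrightarrow> f i \<in> X) \<Longrightarrow> w \<in> X \<Longrightarrow>
   b w (\<Sum>i\<in>I. f i) = (\<Sum>i\<in>I. b w (f i))"
proof -
  assume a: "finite I" "\<And>i. i \<in> I \<Longrightarrow> f i \<in> X" "w \<in> X"
  have "(\<Sum>i\<in>I. f i) \<in> X" using a sub by (intro subspace_sum) auto
  then have "b w (\<Sum>i\<in>I. f i) = b (\<Sum>i\<in>I. f i) w" using a symm by auto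
  also have "\<dots> = (\<Sum>i\<in>I. b (f i) w)" using a by (rule sumL)
  also have "\<dots> = (\<Sum>i\<in>I. b w (f i))" using a symm by (intro sum.cong) auto
  finally show ?thesis .
qed
lemma expand_add: "u \<in> X \<Longrightarrow> v \<in> X \<Longrightarrow> b (u + v) (u + v) = b u u + 2 * b u v + b v v"
  using addL addR symm inX by (simp add: algebra_simps)
lemma expand_diff: assumes "u \<in> X" "v \<in> X" shows "b (u - v) (u - v) = b u u - 2 * b u v + b v v"
proof -
  have "b (u - v) (u - v) = b u (u - v) - b v (u - v)" using assms inX by (simp add: diffL)
  also have "\<dots> = b u u - b u v - (b v u - b v v)" using assms by (simp add: diffR)
  finally show ?thesis using symm assms by simp
qed
lemma sc_sq: assumes "u \<in> X" shows "b (c *\<^sub>R u) (c *\<^sub>R u) = c^2 * b u u"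
proof -
  have "b (c *\<^sub>R u) (c *\<^sub>R u) = c * b u (c *\<^sub>R u)" using assms inX by (simp add: scL)
  also have "\<dots> = c * (c * b u u)" using assms by (simp add: scR)
  finally show ?thesis by (simp add: power2_eq_square)
qed
lemma sym_diff: "u \<in> X \<Longrightarrow> v \<in> X \<Longrightarrow> b (u - v) (u - v) = b (v - u) (v - u)"
  using expand_diff symm by simp

lemma cs: assumes "u \<in> X" "v \<in> X" shows "(b u v)^2 \<le> b u u * b v v"
proof -
  have q: "0 \<le> b u u - 2 * t * b u v + t^2 * b v v" for t
  proof -
    have "0 \<le> b (u - t *\<^sub>R v) (u - t *\<^sub>R v)" using psd inX assms by auto
    also have "\<dots> = b u u - 2 * b u (t *\<^sub>R v) + b (t *\<^sub>R v) (t *\<^sub>R v)"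
      using assms inX by (intro expand_diff) auto
    also have "\<dots> = b u u - 2 * t * b u v + t^2 * b v v"
      using assms inX by (simp only: scR[of v u t] sc_sq[of v t])
    finally show ?thesis .
  qed
  show ?thesis
  proof (cases "b v v = 0")
    case True
    have "b u v = 0"
    proof (rule ccontr)
      assume n: "b u v \<noteq> 0"
      have "0 \<le> b u u - 2 * ((b u u + 1) / (2 * b u v)) * b u v"
        using q[of "(b u u + 1) / (2 * b u v)"] True by simp
      then show False using n by (simp add: field_simps)
    qed
    then show ?thesis using True by simp
  next
    case False
    then have bp: "b v v > 0" using psd[of v] assms by linarith
    have "0 \<le> b u u - 2 * (b u v / b v v) * b u v + (b u v / b v v)^2 * b v v"
      using q by blast
    also have "\<dots> = b u u - (b u v)^2 / b v v"
      using bp by (simp add: field_simps power2_eq_square)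
    finally have "(b u v)^2 / b v v \<le> b u u" by simp
    then show ?thesis using bp by (simp add: field_simps)
  qed
qed

lemma cs_abs: assumes "u \<in> X" "v \<in> X" shows "\<bar>b u v\<bar> \<le> sqrt (b u u) * sqrt (b v v)"
proof -
  have "sqrt ((b u v)^2) \<le> sqrt (b u u * b v v)" using cs[OF assms] by (rule real_sqrt_le_mono)
  then show ?thesis by (simp add: real_sqrt_mult)
qed

lemma tri: assumes "u \<in> X" "v \<in> X"
  shows "sqrt (b (u + v) (u + v)) \<le> sqrt (b u u) + sqrt (b v v)"
proof -
  have "b (u + v) (u + v) = b u u + 2 * b u v + b v v" using assms by (rule expand_add)
  also have "\<dots> \<le> b u u + 2 * (sqrt (b u u) * sqrt (b v v)) + b v v"
    using cs_abs[OF assms] by linarith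
  also have "\<dots> = (sqrt (b u u) + sqrt (b v v))^2"
    using psd assms by (simp add: power2_eq_square algebra_simps)
  finally show ?thesis using psd assms real_le_lsqrt by (simp add: real_le_lsqrt)
qed

lemma tri_diff: assumes "u \<in> X" "v \<in> X" "w \<in> X"
  shows "sqrt (b (u - w) (u - w)) \<le> sqrt (b (u - v) (u - v)) + sqrt (b (v - w) (v - w))"
  using tri[of "u - v" "v - w"] assms inX by simp

end




definition cmpl :: "'a::real_vector set \<Rightarrow> ('a \<Rightarrow> 'a \<Rightarrow> real) \<Rightarrow> bool" where
  "cmpl X b \<longleftrightarrow> (\<forall>x. (\<forall>n. x n \<in> X) \<longrightarrow>
     (\<forall>e>0. \<exists>N. \<forall>m\<ge>N. \<forall>n\<ge>N. sqrt (b (x m - x n) (x m - x n)) < e) \<longrightarrow>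
     (\<exists>y\<in>X. (\<lambda>n. sqrt (b (x n - y) (x n - y))) \<longlonglongrightarrow> 0))"

lemma sqrt_lt_sq: "0 < e \<Longrightarrow> x < e^2 \<Longrightarrow> sqrt x < e"
  by (metis abs_of_pos real_sqrt_abs real_sqrt_less_mono)

context psdf
begin

lemma proj:
  assumes S: "subspace S" "S \<subseteq> X" "cmpl S b" and z: "z \<in> X"
  shows "\<exists>p\<in>S. \<forall>s\<in>S. b (z - p) s = 0"
proof -
  define D where "D = (\<lambda>s. b (z - s) (z - s)) ` S"
  define d where "d = Inf D"
  have S0: "0 \<in> S" using S by (simp add: subspace_0)
  have Dne: "D \<noteq> {}" using S0 D_def by auto
  have nn: "0 \<le> b (z - s) (z - s)" if "s \<in> S" for s
    using psd[of "z - s"] inX(3)[of z s] z that S(2) by blast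
  have Dbdd: "bdd_below D" unfolding D_def using nn by (intro bdd_belowI[of _ 0]) blast
  have dle: "d \<le> b (z - s) (z - s)" if "s \<in> S" for s
    unfolding d_def D_def using Dbdd that D_def by (intro cInf_lower) auto
  have d0: "0 \<le> d" unfolding d_def using Dne nn D_def
    by (intro cInf_greatest) blast+
  define ep where "ep = (\<lambda>n::nat. inverse (real (Suc n)))"
  have ep0: "ep n > 0" for n unfolding ep_def by simp
  have "\<exists>s\<in>S. b (z - s) (z - s) < d + ep n" for n
  proof -
    have "Inf D < d + ep n" using ep0[of n] d_def by simp
    from cInf_lessD[OF Dne this] show ?thesis unfolding D_def by auto
  qed
  then obtain sq where sq: "\<And>n. sq n \<in> S" "\<And>n. b (z - sq n) (z - sq n) < d + ep n"
    by metis
  have sqX: "sq n \<in> X" for n using sq S by auto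
  have key: "b (sq n - sq m) (sq n - sq m) \<le> 2 * ep n + 2 * ep m" for n m
  proof -
    define en where "en = z - sq n"
    define em where "em = z - sq m"
    have X1: "en \<in> X" "em \<in> X" unfolding en_def em_def using sqX z inX by auto
    have mid: "(1/2) *\<^sub>R (sq n + sq m) \<in> S" using S sq by (simp add: subspace_add subspace_scale)
    have "z - (1/2) *\<^sub>R (sq n + sq m) = (1/2) *\<^sub>R (en + em)"
    proof -
      have "z = (1/2) *\<^sub>R z + (1/2) *\<^sub>R z" by (simp flip: scaleR_left_distrib)
      then show ?thesis unfolding en_def em_def by (simp add: algebra_simps)
    qed
    then have "d \<le> b ((1/2) *\<^sub>R (en + em)) ((1/2) *\<^sub>R (en + em))" using dle[OF mid] by simp
    also have "\<dots> = (1/4) * b (en + em) (en + em)" using X1 inX sc_sq[of "en + em" "1/2"]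
      by (simp add: power2_eq_square)
    finally have h1: "4 * d \<le> b (en + em) (en + em)" by simp
    have "sq n - sq m = em - en" unfolding en_def em_def by simp
    then have "b (sq n - sq m) (sq n - sq m) = b em em - 2 * b em en + b en en"
      using expand_diff X1 by simp
    also have "\<dots> = 2 * b em em + 2 * b en en - b (en + em) (en + em)"
      using expand_add[OF X1] symm[OF X1] by simp
    finally show ?thesis using h1 sq(2)[of n] sq(2)[of m] unfolding en_def em_def by simp
  qed
  have cauchy: "\<forall>e>0. \<exists>N. \<forall>m\<ge>N. \<forall>n\<ge>N. sqrt (b (sq m - sq n) (sq m - sq n)) < e"
  proof (intro allI impI)
    fix e :: real assume e: "e > 0"
    obtain N :: nat where N: "4 / e^2 < real N" using reals_Archimedean2 by blast
    have "\<forall>m\<ge>N. \<forall>n\<ge>N. sqrt (b (sq m - sq n) (sq m - sq n)) < e"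
    proof (intro allI impI)
      fix m n assume mn: "m \<ge> N" "n \<ge> N"
      have em: "ep m \<le> inverse (real (Suc N))" "ep n \<le> inverse (real (Suc N))"
        unfolding ep_def using mn by (auto intro!: le_imp_inverse_le)
      have "4 * inverse (real (Suc N)) < e^2"
      proof -
        have e2: "e^2 > 0" using e by simp
        have "4 < real N * e^2" using N e2 by (simp add: field_simps)
        then have "4 < e^2 * real (Suc N)" using e2 by (simp add: algebra_simps del: power2_less_0 zero_less_power2) (smt (verit) e2)
        then show ?thesis by (simp add: field_simps)
      qed
      then have "b (sq m - sq n) (sq m - sq n) < e^2" using key[of m n] em by linarith
      then show "sqrt (b (sq m - sq n) (sq m - sq n)) < e" by (rule sqrt_lt_sq[OF e])
    qed
    then show "\<exists>N. \<forall>m\<ge>N. \<forall>n\<ge>N. sqrt (b (sq m - sq n) (sq m - sq n)) < e" by blast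
  qed
  then obtain p where p: "p \<in> S" "(\<lambda>n. sqrt (b (sq n - p) (sq n - p))) \<longlonglongrightarrow> 0"
    using S(3) sq(1) unfolding cmpl_def by blast
  have pX: "p \<in> X" using p S by auto
  have lim: "(\<lambda>n. sqrt (d + ep n) + sqrt (b (sq n - p) (sq n - p))) \<longlonglongrightarrow> sqrt (d + 0) + 0"
    unfolding ep_def by (intro tendsto_intros p(2) LIMSEQ_inverse_real_of_nat)
  have "sqrt (b (z - p) (z - p)) \<le> sqrt (d + ep n) + sqrt (b (sq n - p) (sq n - p))" for n
  proof -
    have "sqrt (b (z - p) (z - p)) \<le> sqrt (b (z - sq n) (z - sq n)) + sqrt (b (sq n - p) (sq n - p))"
      using tri_diff z sqX pX by blast
    moreover have "sqrt (b (z - sq n) (z - sq n)) \<le> sqrt (d + ep n)" using sq(2)[of n] by simp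
    ultimately show ?thesis by linarith
  qed
  then have "sqrt (b (z - p) (z - p)) \<le> sqrt d"
    using LIMSEQ_le_const[OF lim] by (metis add_0_right)
  then have bzp: "b (z - p) (z - p) \<le> d" by simp
  have "b (z - p) s = 0" if s: "s \<in> S" for s
  proof -
    define c where "c = b (z - p) s"
    define B where "B = b s s"
    have sX: "s \<in> X" using s S by auto
    have zpX: "z - p \<in> X" using z pX inX by auto
    have B0: "B \<ge> 0" unfolding B_def using psd sX by auto
    have q: "0 \<le> - 2 * t * c + t^2 * B" for t
    proof -
      have "p + t *\<^sub>R s \<in> S" using S p s by (simp add: subspace_add subspace_scale)
      then have "d \<le> b (z - (p + t *\<^sub>R s)) (z - (p + t *\<^sub>R s))" by (rule dle)
      also have "z - (p + t *\<^sub>R s) = (z - p) - t *\<^sub>R s" by simp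
      also have "b ((z - p) - t *\<^sub>R s) ((z - p) - t *\<^sub>R s)
          = b (z - p) (z - p) - 2 * b (z - p) (t *\<^sub>R s) + b (t *\<^sub>R s) (t *\<^sub>R s)"
        using zpX sX inX by (intro expand_diff) auto
      also have "\<dots> = b (z - p) (z - p) - 2 * t * c + t^2 * B"
        unfolding c_def B_def using zpX sX by (simp only: scR[of s "z - p" t] sc_sq[of s t])
      finally show ?thesis using bzp by linarith
    qed
    define t where "t = c / (B + 1)"
    have tc: "c = t * (B + 1)" unfolding t_def using B0 by simp
    have "0 \<le> - 2 * t * c + t^2 * B" by (rule q)
    also have "\<dots> = - (t^2 * (B + 2))" unfolding tc by (simp add: algebra_simps power2_eq_square)
    finally have "t^2 * (B + 2) \<le> 0" by simp
    then have "t^2 \<le> 0" using B0 by (simp add: mult_le_0_iff)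
    then have "t = 0" by simp
    then have "c = 0" using tc by simp
    then show ?thesis unfolding c_def by simp
  qed
  then show ?thesis using p by blast
qed

end




locale ips = psdf +
  assumes pos: "\<And>u. u \<in> X \<Longrightarrow> u \<noteq> 0 \<Longrightarrow> b u u > 0"
begin

declare inX[simp]

lemma zero_of: "u \<in> X \<Longrightarrow> b u u = 0 \<Longrightarrow> u = 0"
  using pos by force

lemma uniq: assumes "g \<in> X" "h \<in> X" "\<And>v. v \<in> X \<Longrightarrow> b g v = b h v" shows "g = h"
proof -
  have "b (g - h) (g - h) = b g (g - h) - b h (g - h)" using assms inX by (simp add: diffL)
  also have "\<dots> = 0" using assms inX by simp
  finally have "g - h = 0" using zero_of[of "g - h"] assms inX(3)[of g h] by blast
  then show ?thesis by simp
qed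

lemma riesz:
  assumes C: "cmpl X b"
    and add: "\<And>v w. v \<in> X \<Longrightarrow> w \<in> X \<Longrightarrow> f (v + w) = f v + f w"
    and hom: "\<And>c v. v \<in> X \<Longrightarrow> f (c *\<^sub>R v) = c * f v"
    and bnd: "\<And>v. v \<in> X \<Longrightarrow> \<bar>f v\<bar> \<le> K * sqrt (b v v)"
  shows "\<exists>g\<in>X. \<forall>v\<in>X. f v = b g v"
proof -
  have f0: "f 0 = 0" using hom[of 0 0] inX by simp
  have fd: "f (v - w) = f v - f w" if "v \<in> X" "w \<in> X" for v w
  proof -
    have "f v = f ((v - w) + w)" by simp
    also have "\<dots> = f (v - w) + f w" by (rule add) (simp_all add: that)
    finally show ?thesis by simp
  qed
  define N where "N = {v \<in> X. f v = 0}"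
  have NX: "N \<subseteq> X" unfolding N_def by auto
  have Nsub: "subspace N" unfolding subspace_def N_def
  proof (intro conjI allI ballI impI)
    show "0 \<in> {v \<in> X. f v = 0}" using f0 by simp
  next
    fix x y assume "x \<in> {v \<in> X. f v = 0}" "y \<in> {v \<in> X. f v = 0}"
    then show "x + y \<in> {v \<in> X. f v = 0}" using add[of x y] by simp
  next
    fix c x assume "x \<in> {v \<in> X. f v = 0}"
    then show "c *\<^sub>R x \<in> {v \<in> X. f v = 0}" using hom[of x c] by simp
  qed
  have Ncmpl: "cmpl N b" unfolding cmpl_def
  proof (intro allI impI)
    fix x :: "nat \<Rightarrow> 'a" assume xN: "\<forall>n. x n \<in> N"
      and cau: "\<forall>e>0. \<exists>N. \<forall>m\<ge>N. \<forall>n\<ge>N. sqrt (b (x m - x n) (x m - x n)) < e"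
    have xX: "\<forall>n. x n \<in> X" using xN NX by auto
    then obtain y where y: "y \<in> X" "(\<lambda>n. sqrt (b (x n - y) (x n - y))) \<longlonglongrightarrow> 0"
      using C cau unfolding cmpl_def by blast
    have "\<bar>f y\<bar> \<le> K * sqrt (b (x n - y) (x n - y))" for n
    proof -
      have "f y = f (y - x n)" using fd[OF y(1) xX[rule_format, of n]] xN N_def by simp
      also have "\<bar>\<dots>\<bar> \<le> K * sqrt (b (y - x n) (y - x n))" using bnd y xX by simp
      also have "b (y - x n) (y - x n) = b (x n - y) (x n - y)" using sym_diff y xX by metis
      finally show ?thesis .
    qed
    then have ev: "\<exists>N. \<forall>n\<ge>N. \<bar>f y\<bar> \<le> K * sqrt (b (x n - y) (x n - y))" by blast
    have "(\<lambda>n. K * sqrt (b (x n - y) (x n - y))) \<longlonglongrightarrow> K * 0"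
      by (intro tendsto_intros y(2))
    from LIMSEQ_le_const[OF this ev] have "\<bar>f y\<bar> \<le> K * 0" .
    then have "y \<in> N" using y N_def by simp
    then show "\<exists>y\<in>N. (\<lambda>n. sqrt (b (x n - y) (x n - y))) \<longlonglongrightarrow> 0" using y by blast
  qed
  show ?thesis
  proof (cases "\<forall>v\<in>X. f v = 0")
    case True
    then show ?thesis using zeroL by (intro bexI[of _ 0]) simp_all
  next
    case False
    then obtain z where z: "z \<in> X" "f z \<noteq> 0" by blast
    obtain p where p: "p \<in> N" "\<forall>s\<in>N. b (z - p) s = 0"
      using proj[OF Nsub NX Ncmpl z(1)] by blast
    have pX: "p \<in> X" using p NX by auto
    define w where "w = z - p"
    have wX: "w \<in> X" using w_def z(1) pX by simp
    have fw: "f w = f z" unfolding w_def using fd[OF z(1) pX] p(1) N_def by simp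
    have wn: "w \<noteq> 0" using fw z f0 by force
    have bw: "b w w > 0" using pos wX wn by blast
    have "f v = b ((f w / b w w) *\<^sub>R w) v" if v: "v \<in> X" for v
    proof -
      have sX: "f v *\<^sub>R w - f w *\<^sub>R v \<in> X" using v wX by simp
      have "f (f v *\<^sub>R w - f w *\<^sub>R v) = f v * f w - f w * f v"
        using fd hom v wX inX by simp
      then have "f v *\<^sub>R w - f w *\<^sub>R v \<in> N" using sX N_def by simp
      then have "0 = b w (f v *\<^sub>R w - f w *\<^sub>R v)" using p(2) w_def by simp
      also have "\<dots> = f v * b w w - f w * b w v" using v wX inX by (simp add: diffR scR)
      finally have "f v = f w * b w v / b w w" using bw by (simp add: field_simps)
      then show ?thesis using v wX by (simp add: scL)
    qed
    then show ?thesis using wX inX(2)[of w "f w / b w w"] by blast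
  qed
qed

lemma lax_milgram:
  assumes C: "cmpl X b"
    and aL: "\<And>u v w. u \<in> X \<Longrightarrow> v \<in> X \<Longrightarrow> w \<in> X \<Longrightarrow> a (u + v) w = a u w + a v w"
    and aLs: "\<And>c u w. u \<in> X \<Longrightarrow> w \<in> X \<Longrightarrow> a (c *\<^sub>R u) w = c * a u w"
    and aR: "\<And>u v w. u \<in> X \<Longrightarrow> v \<in> X \<Longrightarrow> w \<in> X \<Longrightarrow> a w (u + v) = a w u + a w v"
    and aRs: "\<And>c u w. u \<in> X \<Longrightarrow> w \<in> X \<Longrightarrow> a w (c *\<^sub>R u) = c * a w u"
    and abnd: "\<And>u v. u \<in> X \<Longrightarrow> v \<in> X \<Longrightarrow> \<bar>a u v\<bar> \<le> M * sqrt (b u u) * sqrt (b v v)"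
    and M0: "M \<ge> 0"
    and coer: "\<And>u. u \<in> X \<Longrightarrow> a u u \<ge> \<alpha> * b u u" and al: "\<alpha> > 0"
    and add: "\<And>v w. v \<in> X \<Longrightarrow> w \<in> X \<Longrightarrow> f (v + w) = f v + f w"
    and hom: "\<And>c v. v \<in> X \<Longrightarrow> f (c *\<^sub>R v) = c * f v"
    and bnd: "\<And>v. v \<in> X \<Longrightarrow> \<bar>f v\<bar> \<le> K * sqrt (b v v)"
  shows "\<exists>u\<in>X. \<forall>v\<in>X. a u v = f v"
proof -
  have ex: "\<exists>g\<in>X. \<forall>v\<in>X. a u v = b g v" if u: "u \<in> X" for u
  proof (rule riesz[OF C, of "a u" "M * sqrt (b u u)"])
    show "\<And>v w. v \<in> X \<Longrightarrow> w \<in> X \<Longrightarrow> a u (v + w) = a u v + a u w" using aR u by blast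
    show "\<And>c v. v \<in> X \<Longrightarrow> a u (c *\<^sub>R v) = c * a u v" using aRs u by blast
    show "\<And>v. v \<in> X \<Longrightarrow> \<bar>a u v\<bar> \<le> M * sqrt (b u u) * sqrt (b v v)" using abnd u by blast
  qed
  define T where "T = (\<lambda>u. SOME g. g \<in> X \<and> (\<forall>v\<in>X. a u v = b g v))"
  have T: "T u \<in> X" "\<And>v. v \<in> X \<Longrightarrow> a u v = b (T u) v" if "u \<in> X" for u
    using someI_ex[OF ex[OF that, unfolded Bex_def]] unfolding T_def by blast+
  have Tadd: "T (u + w) = T u + T w" if "u \<in> X" "w \<in> X" for u w
    using that T aL addL by (intro uniq) simp_all
  have Tsc: "T (c *\<^sub>R u) = c *\<^sub>R T u" if "u \<in> X" for u c
    using that T aLs scL by (intro uniq) simp_all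
  have Tdiff: "T (u - w) = T u - T w" if "u \<in> X" "w \<in> X" for u w
  proof -
    have "T u = T ((u - w) + w)" by simp
    also have "\<dots> = T (u - w) + T w" by (rule Tadd) (simp_all add: that)
    finally show ?thesis by simp
  qed
  have T0: "T 0 = 0" using Tsc[of 0 0] inX by simp
  define R where "R = T ` X"
  have RX: "R \<subseteq> X" using T R_def by auto
  have Rsub: "subspace R" unfolding subspace_def R_def
  proof (intro conjI ballI allI)
    show "0 \<in> T ` X" using T0 inX(4) by (metis image_eqI)
  next
    fix x y assume "x \<in> T ` X" "y \<in> T ` X"
    then obtain u w where uw: "u \<in> X" "w \<in> X" "x = T u" "y = T w" by blast
    then have "x + y = T (u + w)" using Tadd by simp
    then show "x + y \<in> T ` X" using uw by simp
  next
    fix c x assume "x \<in> T ` X"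
    then obtain u where uw: "u \<in> X" "x = T u" by blast
    then have "c *\<^sub>R x = T (c *\<^sub>R u)" using Tsc by simp
    then show "c *\<^sub>R x \<in> T ` X" using uw by simp
  qed
  have low: "\<alpha> * sqrt (b u u) \<le> sqrt (b (T u) (T u))" if u: "u \<in> X" for u
  proof (cases "b u u = 0")
    case True then show ?thesis using psd T u by simp
  next
    case False
    then have bp: "sqrt (b u u) > 0" using psd u by (simp add: order_less_le)
    have "\<alpha> * (sqrt (b u u))^2 = \<alpha> * b u u" using psd u by simp
    also have "\<dots> \<le> a u u" using coer u by simp
    also have "\<dots> = b (T u) u" using T u by simp
    also have "\<dots> \<le> sqrt (b (T u) (T u)) * sqrt (b u u)" using cs_abs T u by fastforce
    finally have "(\<alpha> * sqrt (b u u)) * sqrt (b u u) \<le> sqrt (b (T u) (T u)) * sqrt (b u u)"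
      by (simp add: power2_eq_square mult.assoc)
    then show ?thesis using bp by simp
  qed
  have up: "sqrt (b (T u) (T u)) \<le> M * sqrt (b u u)" if u: "u \<in> X" for u
  proof (cases "b (T u) (T u) = 0")
    case True then show ?thesis using psd u M0 by simp
  next
    case False
    then have bp: "sqrt (b (T u) (T u)) > 0" using psd T u by (simp add: order_less_le)
    have "(sqrt (b (T u) (T u)))^2 = b (T u) (T u)" using psd T u by simp
    also have "\<dots> = a u (T u)" using T u by simp
    also have "\<dots> \<le> M * sqrt (b u u) * sqrt (b (T u) (T u))" using abnd T u by fastforce
    finally have "sqrt (b (T u) (T u)) * sqrt (b (T u) (T u)) \<le> (M * sqrt (b u u)) * sqrt (b (T u) (T u))"
      by (simp only: power2_eq_square)
    then show ?thesis using bp by (rule mult_right_le_imp_le)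
  qed
  have Rcmpl: "cmpl R b" unfolding cmpl_def
  proof (intro allI impI)
    fix y :: "nat \<Rightarrow> 'a" assume yR: "\<forall>n. y n \<in> R"
      and cau: "\<forall>e>0. \<exists>N. \<forall>m\<ge>N. \<forall>n\<ge>N. sqrt (b (y m - y n) (y m - y n)) < e"
    have "\<forall>n. \<exists>u. u \<in> X \<and> y n = T u" using yR R_def by auto
    then obtain u where u: "\<And>n. u n \<in> X" "\<And>n. y n = T (u n)" by metis
    have cu: "\<forall>e>0. \<exists>N. \<forall>m\<ge>N. \<forall>n\<ge>N. sqrt (b (u m - u n) (u m - u n)) < e"
    proof (intro allI impI)
      fix e :: real assume e: "e > 0"
      then obtain N where N: "\<forall>m\<ge>N. \<forall>n\<ge>N. sqrt (b (y m - y n) (y m - y n)) < \<alpha> * e"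
        using cau al by (meson mult_pos_pos)
      have "\<forall>m\<ge>N. \<forall>n\<ge>N. sqrt (b (u m - u n) (u m - u n)) < e"
      proof (intro allI impI)
        fix m n assume "m \<ge> N" "n \<ge> N"
        then have "\<alpha> * sqrt (b (u m - u n) (u m - u n)) < \<alpha> * e"
          using low[of "u m - u n"] u Tdiff N by (simp add: le_less_trans)
        then show "sqrt (b (u m - u n) (u m - u n)) < e" using al by simp
      qed
      then show "\<exists>N. \<forall>m\<ge>N. \<forall>n\<ge>N. sqrt (b (u m - u n) (u m - u n)) < e" by blast
    qed
    then obtain x where x: "x \<in> X" "(\<lambda>n. sqrt (b (u n - x) (u n - x))) \<longlonglongrightarrow> 0"
      using C u(1) unfolding cmpl_def by blast
    have "(\<lambda>n. sqrt (b (y n - T x) (y n - T x))) \<longlonglongrightarrow> 0"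
    proof (rule Lim_null_comparison)
      show "\<forall>\<^sub>F n in sequentially. norm (sqrt (b (y n - T x) (y n - T x))) \<le> M * sqrt (b (u n - x) (u n - x))"
      proof (intro always_eventually allI)
        fix n
        have "y n - T x = T (u n - x)" using u x Tdiff by simp
        then show "norm (sqrt (b (y n - T x) (y n - T x))) \<le> M * sqrt (b (u n - x) (u n - x))"
          using up[of "u n - x"] u x psd[of "T (u n - x)"] T(1)[of "u n - x"] by simp
      qed
      show "(\<lambda>n. M * sqrt (b (u n - x) (u n - x))) \<longlonglongrightarrow> 0"
        using tendsto_mult_right_zero[OF x(2)] by simp
    qed
    then show "\<exists>z\<in>R. (\<lambda>n. sqrt (b (y n - z) (y n - z))) \<longlonglongrightarrow> 0"
      using x R_def by blast
  qed
  obtain g where g: "g \<in> X" "\<And>v. v \<in> X \<Longrightarrow> f v = b g v" using riesz[OF C add hom bnd] by blast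
  obtain q where q: "q \<in> R" "\<forall>s\<in>R. b (g - q) s = 0" using proj[OF Rsub RX Rcmpl g(1)] by blast
  obtain u0 where u0: "u0 \<in> X" "q = T u0" using q R_def by auto
  define w where "w = g - q"
  have wX: "w \<in> X" using w_def g q RX by auto
  have "T w \<in> R" using wX R_def by simp
  then have "0 = b w (T w)" using q w_def by simp
  also have "\<dots> = a w w" using T wX symm by simp
  finally have "\<alpha> * b w w \<le> 0" using coer[OF wX] by simp
  then have "b w w = 0" using al psd[OF wX] by (simp add: mult_le_0_iff)
  then have "w = 0" using zero_of wX by blast
  then have gq: "g = T u0" using w_def u0 by simp
  show ?thesis using u0 T g gq by (intro bexI[of _ u0]) auto
qed

end




context ips
begin

lemma cmpl_span:
  assumes "finite B" "B \<subseteq> X" shows "cmpl (span B) b"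
  using assms
proof (induction B rule: finite_induct)
  case empty
  show ?case unfolding cmpl_def
  proof (intro allI impI)
    fix x :: "nat \<Rightarrow> 'a" assume "\<forall>n. x n \<in> span {}"
    then have "\<forall>n. x n = 0" by simp
    then show "\<exists>y\<in>span {}. (\<lambda>n. sqrt (b (x n - y) (x n - y))) \<longlonglongrightarrow> 0"
      using zeroL inX(4) by (intro bexI[of _ 0]) simp_all
  qed
next
  case (insert c B)
  have cX: "c \<in> X" and BX: "B \<subseteq> X" using insert by auto
  have IH: "cmpl (span B) b" using insert BX by blast
  have SX: "span B \<subseteq> X" using BX sub by (rule span_minimal)
  have S'X: "span (insert c B) \<subseteq> X" using insert sub by (intro span_minimal) auto
  obtain p where p: "p \<in> span B" "\<forall>s\<in>span B. b (c - p) s = 0"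
    using proj[OF subspace_span SX IH cX] by blast
  define w where "w = c - p"
  have pX: "p \<in> X" using p SX by auto
  have wX: "w \<in> X" unfolding w_def using cX pX by simp
  show ?case
  proof (cases "w = 0")
    case True
    then have "c \<in> span B" using p w_def by simp
    then show ?thesis using IH span_redundant by metis
  next
    case False
    have bw: "b w w > 0" using pos wX False by blast
    have wS': "w \<in> span (insert c B)" unfolding w_def
      using p span_mono[of B "insert c B"] span_base[of c "insert c B"]
      by (metis (no_types, lifting) insertI1 subset_insertI subsetD subspace_diff subspace_span)
    show ?thesis unfolding cmpl_def
    proof (intro allI impI)
      fix x :: "nat \<Rightarrow> 'a" assume xS: "\<forall>n. x n \<in> span (insert c B)"
        and cau: "\<forall>e>0. \<exists>N. \<forall>m\<ge>N. \<forall>n\<ge>N. sqrt (b (x m - x n) (x m - x n)) < e"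
      have "\<forall>n. \<exists>k. x n - k *\<^sub>R c \<in> span B" using xS unfolding span_insert by blast
      then obtain k where k: "\<And>n. x n - k n *\<^sub>R c \<in> span B" by metis
      define s where "s = (\<lambda>n. x n - k n *\<^sub>R w)"
      have sS: "s n \<in> span B" for n
      proof -
        have "s n = (x n - k n *\<^sub>R c) + k n *\<^sub>R p" unfolding s_def w_def by (simp add: algebra_simps)
        then show ?thesis using k p by (simp add: span_add span_scale)
      qed
      have sX: "s n \<in> X" for n using sS SX by auto
      have xX: "x n \<in> X" for n using xS S'X by auto
      have dec: "b (x m - x n) (x m - x n) = b (s m - s n) (s m - s n) + (k m - k n)^2 * b w w" for m n
      proof -
        have e: "x m - x n = (s m - s n) + (k m - k n) *\<^sub>R w" unfolding s_def by (simp add: algebra_simps)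
        have sd: "s m - s n \<in> span B" using sS by (simp add: span_diff)
        have z: "b (s m - s n) w = 0" using p(2) sd symm[of w "s m - s n"] w_def wX sX by simp
        have "b (x m - x n) (x m - x n) = b (s m - s n) (s m - s n) + 2 * b (s m - s n) ((k m - k n) *\<^sub>R w)
           + b ((k m - k n) *\<^sub>R w) ((k m - k n) *\<^sub>R w)" unfolding e using sX wX by (intro expand_add) simp_all
        also have "\<dots> = b (s m - s n) (s m - s n) + (k m - k n)^2 * b w w"
        proof -
          have "b (s m - s n) ((k m - k n) *\<^sub>R w) = 0" using z sX wX scR[of w "s m - s n" "k m - k n"] by simp
          moreover have "b ((k m - k n) *\<^sub>R w) ((k m - k n) *\<^sub>R w) = (k m - k n)^2 * b w w"
            by (rule sc_sq[OF wX])
          ultimately show ?thesis by simp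
        qed
        finally show ?thesis .
      qed
      have les: "sqrt (b (s m - s n) (s m - s n)) \<le> sqrt (b (x m - x n) (x m - x n))" for m n
        using dec[of m n] bw by simp
      have lek: "\<bar>k m - k n\<bar> * sqrt (b w w) \<le> sqrt (b (x m - x n) (x m - x n))" for m n
      proof -
        have "\<bar>k m - k n\<bar> * sqrt (b w w) = sqrt ((k m - k n)^2 * b w w)" by (simp add: real_sqrt_mult)
        also have "\<dots> \<le> sqrt (b (x m - x n) (x m - x n))" using dec[of m n] psd[of "s m - s n"] sX by simp
        finally show ?thesis .
      qed
      have caus: "\<forall>e>0. \<exists>N. \<forall>m\<ge>N. \<forall>n\<ge>N. sqrt (b (s m - s n) (s m - s n)) < e"
        using cau les by (meson le_less_trans)
      obtain sl where sl: "sl \<in> span B" "(\<lambda>n. sqrt (b (s n - sl) (s n - sl))) \<longlonglongrightarrow> 0"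
        using IH sS caus unfolding cmpl_def by blast
      have "Cauchy k"
      proof (rule CauchyI)
        fix e :: real assume e: "0 < e"
        obtain N where N: "\<forall>m\<ge>N. \<forall>n\<ge>N. sqrt (b (x m - x n) (x m - x n)) < e * sqrt (b w w)"
          using cau e bw by (meson mult_pos_pos real_sqrt_gt_zero)
        have "\<forall>m\<ge>N. \<forall>n\<ge>N. norm (k m - k n) < e"
        proof (intro allI impI)
          fix m n assume "m \<ge> N" "n \<ge> N"
          then have "\<bar>k m - k n\<bar> * sqrt (b w w) < e * sqrt (b w w)" using N lek le_less_trans by blast
          then show "norm (k m - k n) < e" using bw by simp
        qed
        then show "\<exists>M. \<forall>m\<ge>M. \<forall>n\<ge>M. norm (k m - k n) < e" by blast
      qed
      then obtain kl where kl: "k \<longlonglongrightarrow> kl" using Cauchy_convergent_iff convergent_def by blast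
      define y where "y = sl + kl *\<^sub>R w"
      have yS: "y \<in> span (insert c B)" unfolding y_def using sl(1) wS' span_mono[of B "insert c B"]
        by (meson span_add span_scale subset_insertI subsetD)
      have slX: "sl \<in> X" using sl SX by auto
      have "(\<lambda>n. sqrt (b (x n - y) (x n - y))) \<longlonglongrightarrow> 0"
      proof (rule Lim_null_comparison)
        show "\<forall>\<^sub>F n in sequentially. norm (sqrt (b (x n - y) (x n - y)))
           \<le> sqrt (b (s n - sl) (s n - sl)) + \<bar>k n - kl\<bar> * sqrt (b w w)"
        proof (intro always_eventually allI)
          fix n
          have e: "x n - y = (s n - sl) + (k n - kl) *\<^sub>R w" unfolding s_def y_def by (simp add: algebra_simps)
          have "sqrt (b (x n - y) (x n - y)) \<le> sqrt (b (s n - sl) (s n - sl))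
              + sqrt (b ((k n - kl) *\<^sub>R w) ((k n - kl) *\<^sub>R w))"
            unfolding e using sX slX wX by (intro tri) simp_all
          also have "sqrt (b ((k n - kl) *\<^sub>R w) ((k n - kl) *\<^sub>R w)) = \<bar>k n - kl\<bar> * sqrt (b w w)"
            using wX by (simp add: sc_sq real_sqrt_mult)
          finally show "norm (sqrt (b (x n - y) (x n - y)))
           \<le> sqrt (b (s n - sl) (s n - sl)) + \<bar>k n - kl\<bar> * sqrt (b w w)"
            using psd xX yS S'X by auto
        qed
        have "(\<lambda>n. k n - kl) \<longlonglongrightarrow> 0" using kl by (simp add: LIM_zero)
        then have "(\<lambda>n. \<bar>k n - kl\<bar>) \<longlonglongrightarrow> 0" by (simp add: tendsto_rabs_zero)
        then show "(\<lambda>n. sqrt (b (s n - sl) (s n - sl)) + \<bar>k n - kl\<bar> * sqrt (b w w)) \<longlonglongrightarrow> 0"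
          using sl(2) tendsto_add_zero tendsto_mult_left_zero by blast
      qed
      then show "\<exists>y\<in>span (insert c B). (\<lambda>n. sqrt (b (x n - y) (x n - y))) \<longlonglongrightarrow> 0"
        using yS by blast
    qed
  qed
qed

end




definition Xv :: "'v::real_vector set \<Rightarrow> ('v^'n) set" where "Xv W = {x. \<forall>i. x$i \<in> W}"
definition ipv :: "('v::real_vector \<Rightarrow> 'v \<Rightarrow> real) \<Rightarrow> 'v^'n \<Rightarrow> 'v^'n \<Rightarrow> real" where
  "ipv Q x y = (\<Sum>i\<in>UNIV. Q (x$i) (y$i))"

lemma psdf_vec: assumes "psdf W Q" shows "psdf (Xv W :: ('v::real_vector^'n) set) (ipv Q)"
proof -
  interpret psdf W Q by fact
  show ?thesis
  proof
    show "subspace (Xv W :: ('v^'n) set)" unfolding subspace_def Xv_def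
      by (simp add: inX(1,2,4))
    show "sym_bilinear_on (Xv W :: ('v^'n) set) (ipv Q)" unfolding sym_bilinear_on_def Xv_def ipv_def
      using symm addL scL by (simp add: sum.distrib sum_distrib_left)
    show "\<And>u. u \<in> (Xv W :: ('v^'n) set) \<Longrightarrow> 0 \<le> ipv Q u u" unfolding Xv_def ipv_def
      using psd by (simp add: sum_nonneg)
  qed
qed

lemma ips_vec: assumes "ips W Q" shows "ips (Xv W :: ('v::real_vector^'n) set) (ipv Q)"
proof -
  interpret ips W Q by fact
  interpret V: psdf "Xv W :: ('v^'n) set" "ipv Q" by (rule psdf_vec[OF psdf_axioms])
  show ?thesis
  proof
    fix u :: "'v^'n" assume u: "u \<in> Xv W" "u \<noteq> 0"
    then obtain i where i: "u$i \<noteq> 0" by (metis vec_eq_iff zero_index)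
    have uX: "u$j \<in> W" for j using u Xv_def by auto
    have "0 < Q (u$i) (u$i)" using pos uX i by blast
    also have "\<dots> \<le> (\<Sum>j\<in>UNIV. Q (u$j) (u$j))"
      by (intro member_le_sum) (simp_all add: psd uX)
    finally show "0 < ipv Q u u" unfolding ipv_def .
  qed
qed

lemma cmpl_vec: assumes "psdf W Q" "cmpl W Q" shows "cmpl (Xv W :: ('v::real_vector^'n) set) (ipv Q)"
proof -
  interpret psdf W Q by fact
  show ?thesis unfolding cmpl_def
  proof (intro allI impI)
    fix x :: "nat \<Rightarrow> 'v^'n" assume xX: "\<forall>n. x n \<in> Xv W"
      and cau: "\<forall>e>0. \<exists>N. \<forall>m\<ge>N. \<forall>n\<ge>N. sqrt (ipv Q (x m - x n) (x m - x n)) < e"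
    have xW: "x n $ i \<in> W" for n i using xX Xv_def by auto
    have comp: "sqrt (Q (x m $ i - x n $ i) (x m $ i - x n $ i)) \<le> sqrt (ipv Q (x m - x n) (x m - x n))" for m n i
    proof -
      have "Q ((x m - x n) $ i) ((x m - x n) $ i) \<le> (\<Sum>j\<in>UNIV. Q ((x m - x n)$j) ((x m - x n)$j))"
        by (intro member_le_sum) (simp_all add: psd xW inX(3))
      then show ?thesis unfolding ipv_def by simp
    qed
    have "\<forall>i. \<exists>y\<in>W. (\<lambda>n. sqrt (Q (x n $ i - y) (x n $ i - y))) \<longlonglongrightarrow> 0"
    proof
      fix i
      have "\<forall>e>0. \<exists>N. \<forall>m\<ge>N. \<forall>n\<ge>N. sqrt (Q (x m $ i - x n $ i) (x m $ i - x n $ i)) < e"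
      proof (intro allI impI)
        fix e :: real assume "e > 0"
        then obtain N where N: "\<forall>m\<ge>N. \<forall>n\<ge>N. sqrt (ipv Q (x m - x n) (x m - x n)) < e" using cau by blast
        show "\<exists>N. \<forall>m\<ge>N. \<forall>n\<ge>N. sqrt (Q (x m $ i - x n $ i) (x m $ i - x n $ i)) < e"
        proof (intro exI[of _ N] allI impI)
          fix m n assume mn: "m \<ge> N" "n \<ge> N"
          have "sqrt (ipv Q (x m - x n) (x m - x n)) < e" using N mn by blast
          then show "sqrt (Q (x m $ i - x n $ i) (x m $ i - x n $ i)) < e"
            using comp[where m=m and n=n and i=i] by linarith
        qed
      qed
      moreover have "\<forall>n. x n $ i \<in> W" using xW by blast
      ultimately show "\<exists>y\<in>W. (\<lambda>n. sqrt (Q (x n $ i - y) (x n $ i - y))) \<longlonglongrightarrow> 0"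
        using assms(2)[unfolded cmpl_def, rule_format, of "\<lambda>n. x n $ i"] by blast
    qed
    then have "\<exists>yf. \<forall>i. yf i \<in> W \<and> (\<lambda>n. sqrt (Q (x n $ i - yf i) (x n $ i - yf i))) \<longlonglongrightarrow> 0"
      unfolding Bex_def by (rule choice)
    then obtain yf where yf: "\<And>i. yf i \<in> W" "\<And>i. (\<lambda>n. sqrt (Q (x n $ i - yf i) (x n $ i - yf i))) \<longlonglongrightarrow> 0"
      by blast
    define y where "y = (\<chi> i. yf i)"
    have yX: "y \<in> Xv W" unfolding Xv_def y_def using yf by simp
    have "(\<lambda>n. \<Sum>i\<in>UNIV. (sqrt (Q (x n $ i - yf i) (x n $ i - yf i)))^2) \<longlonglongrightarrow> (\<Sum>i\<in>(UNIV::'n set). 0^2)"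
      by (intro tendsto_intros yf(2))
    moreover have "(\<Sum>i\<in>UNIV. (sqrt (Q (x n $ i - yf i) (x n $ i - yf i)))^2) = ipv Q (x n - y) (x n - y)" for n
      unfolding ipv_def y_def by (simp add: psd xW yf inX(3))
    ultimately have "(\<lambda>n. ipv Q (x n - y) (x n - y)) \<longlonglongrightarrow> 0" by simp
    then have "(\<lambda>n. sqrt (ipv Q (x n - y) (x n - y))) \<longlonglongrightarrow> sqrt 0" by (intro tendsto_intros)
    then show "\<exists>y\<in>Xv W. (\<lambda>n. sqrt (ipv Q (x n - y) (x n - y))) \<longlonglongrightarrow> 0" using yX by (intro bexI[of _ y]) simp_all
  qed
qed

lemma cmpl_equiv:
  assumes sub: "subspace V" and q1: "\<And>x. x \<in> V \<Longrightarrow> 0 \<le> q1 x x"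
    and lo: "\<And>x. x \<in> V \<Longrightarrow> m * q1 x x \<le> q2 x x" and hi: "\<And>x. x \<in> V \<Longrightarrow> q2 x x \<le> K * q1 x x"
    and m: "m > 0" and C: "cmpl V q1"
  shows "cmpl V q2"
  unfolding cmpl_def
proof (intro allI impI)
  fix x :: "nat \<Rightarrow> 'a" assume xV: "\<forall>n. x n \<in> V"
    and cau: "\<forall>e>0. \<exists>N. \<forall>m\<ge>N. \<forall>n\<ge>N. sqrt (q2 (x m - x n) (x m - x n)) < e"
  have dV: "x a - x c \<in> V" for a c using xV sub by (simp add: subspace_diff)
  have "\<forall>e>0. \<exists>N. \<forall>a\<ge>N. \<forall>c\<ge>N. sqrt (q1 (x a - x c) (x a - x c)) < e"
  proof (intro allI impI)
    fix e :: real assume e: "e > 0"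
    have "sqrt m * e > 0" using e m by simp
    then obtain N where N: "\<forall>a\<ge>N. \<forall>c\<ge>N. sqrt (q2 (x a - x c) (x a - x c)) < sqrt m * e"
      using cau by blast
    have "\<forall>a\<ge>N. \<forall>c\<ge>N. sqrt (q1 (x a - x c) (x a - x c)) < e"
    proof (intro allI impI)
      fix a c assume "a \<ge> N" "c \<ge> N"
      then have h: "sqrt (q2 (x a - x c) (x a - x c)) < sqrt m * e" using N by blast
      have "sqrt m * sqrt (q1 (x a - x c) (x a - x c)) = sqrt (m * q1 (x a - x c) (x a - x c))"
        by (simp add: real_sqrt_mult)
      also have "\<dots> \<le> sqrt (q2 (x a - x c) (x a - x c))" using lo dV by simp
      finally have "sqrt m * sqrt (q1 (x a - x c) (x a - x c)) < sqrt m * e" using h by linarith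
      then show "sqrt (q1 (x a - x c) (x a - x c)) < e" using m by simp
    qed
    then show "\<exists>N. \<forall>a\<ge>N. \<forall>c\<ge>N. sqrt (q1 (x a - x c) (x a - x c)) < e" by blast
  qed
  then obtain y where y: "y \<in> V" "(\<lambda>n. sqrt (q1 (x n - y) (x n - y))) \<longlonglongrightarrow> 0"
    using C[unfolded cmpl_def, rule_format, of x] xV by blast
  have yV: "x n - y \<in> V" for n using xV y sub by (simp add: subspace_diff)
  have "(\<lambda>n. sqrt (q2 (x n - y) (x n - y))) \<longlonglongrightarrow> 0"
  proof (rule Lim_null_comparison)
    show "\<forall>\<^sub>F n in sequentially. norm (sqrt (q2 (x n - y) (x n - y))) \<le> sqrt K * sqrt (q1 (x n - y) (x n - y))"
    proof (intro always_eventually allI)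
      fix n
      have "0 \<le> m * q1 (x n - y) (x n - y)" using q1[OF yV[of n]] m by simp
      then have a: "0 \<le> q2 (x n - y) (x n - y)" using lo[OF yV[of n]] by linarith
      have "sqrt (q2 (x n - y) (x n - y)) \<le> sqrt (K * q1 (x n - y) (x n - y))" using hi yV by simp
      then show "norm (sqrt (q2 (x n - y) (x n - y))) \<le> sqrt K * sqrt (q1 (x n - y) (x n - y))"
        using a by (simp add: real_sqrt_mult)
    qed
    show "(\<lambda>n. sqrt K * sqrt (q1 (x n - y) (x n - y))) \<longlonglongrightarrow> 0"
      using tendsto_mult_right_zero[OF y(2)] by simp
  qed
  then show "\<exists>y\<in>V. (\<lambda>n. sqrt (q2 (x n - y) (x n - y))) \<longlonglongrightarrow> 0" using y by blast
qed




context psdf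
begin

lemma trace_psd:
  assumes "finite I"
  shows "(\<forall>x. 0 \<le> (\<Sum>i\<in>I. \<Sum>k\<in>I. S i k * x i * x k)) \<Longrightarrow> (\<forall>i. u i \<in> X)
      \<Longrightarrow> 0 \<le> (\<Sum>i\<in>I. \<Sum>k\<in>I. S i k * b (u i) (u k))"
  using assms
proof (induction I arbitrary: u rule: finite_induct)
  case empty then show ?case by simp
next
  case (insert j I)
  have uX: "\<And>i. u i \<in> X" using insert by blast
  have HI: "\<forall>x. 0 \<le> (\<Sum>i\<in>I. \<Sum>k\<in>I. S i k * x i * x k)"
  proof
    fix x :: "'b \<Rightarrow> real"
    have "0 \<le> (\<Sum>i\<in>insert j I. \<Sum>k\<in>insert j I. S i k * (x(j:=0)) i * (x(j:=0)) k)"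
      using insert.prems(1) by blast
    also have "\<dots> = (\<Sum>i\<in>I. \<Sum>k\<in>I. S i k * (x(j:=0)) i * (x(j:=0)) k)"
      using insert.hyps by simp
    also have "\<dots> = (\<Sum>i\<in>I. \<Sum>k\<in>I. S i k * x i * x k)"
      using insert.hyps by (intro sum.cong refl) auto
    finally show "0 \<le> (\<Sum>i\<in>I. \<Sum>k\<in>I. S i k * x i * x k)" .
  qed
  define q where "q = b (u j) (u j)"
  have q0: "q \<ge> 0" unfolding q_def using psd uX by simp
  define t where "t = (\<lambda>i. if q = 0 then 0 else b (u i) (u j) / q)"
  define u' where "u' = (\<lambda>i. u i - t i *\<^sub>R u j)"
  have u'X: "\<And>i. u' i \<in> X" unfolding u'_def by (intro inX(3) uX inX(2))
  have F1: "b (u i) (u k) = b (u' i) (u' k) + t i * t k * q" for i k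
  proof (cases "q = 0")
    case True then show ?thesis unfolding u'_def t_def by simp
  next
    case False
    have ti: "b (u i) (u j) = t i * q" "b (u j) (u k) = t k * q"
      unfolding t_def using False symm uX by auto
    have "b (u' i) (u' k) = b (u i) (u k) - t k * b (u i) (u j) - t i * b (u j) (u k) + t i * t k * q"
      unfolding u'_def q_def using uX by (simp add: diffL diffR scL scR inX(2) inX(3) algebra_simps)
    then show ?thesis using ti by (simp add: algebra_simps)
  qed
  have F2: "b (u' j) (u' k) = 0 \<and> b (u' k) (u' j) = 0" for k
  proof (cases "q = 0")
    case True
    have "\<bar>b (u j) v\<bar> \<le> sqrt q * sqrt (b v v)" if "v \<in> X" for v
      unfolding q_def using cs_abs uX that by blast
    then have "b (u j) v = 0" if "v \<in> X" for v using True that by simp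
    moreover have "u' i = u i" for i unfolding u'_def t_def using True by simp
    ultimately show ?thesis using uX symm by metis
  next
    case False
    then have "u' j = 0" unfolding u'_def t_def q_def by simp
    then show ?thesis using zeroL zeroR u'X by simp
  qed
  have "(\<Sum>i\<in>insert j I. \<Sum>k\<in>insert j I. S i k * b (u i) (u k))
      = (\<Sum>i\<in>insert j I. \<Sum>k\<in>insert j I. S i k * b (u' i) (u' k))
        + q * (\<Sum>i\<in>insert j I. \<Sum>k\<in>insert j I. S i k * t i * t k)"
    unfolding F1 by (simp add: algebra_simps sum.distrib sum_distrib_left)
  also have "(\<Sum>i\<in>insert j I. \<Sum>k\<in>insert j I. S i k * b (u' i) (u' k))
      = (\<Sum>i\<in>I. \<Sum>k\<in>I. S i k * b (u' i) (u' k))"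
    using insert.hyps F2 by simp
  finally have eq: "(\<Sum>i\<in>insert j I. \<Sum>k\<in>insert j I. S i k * b (u i) (u k))
      = (\<Sum>i\<in>I. \<Sum>k\<in>I. S i k * b (u' i) (u' k)) + q * (\<Sum>i\<in>insert j I. \<Sum>k\<in>insert j I. S i k * t i * t k)" .
  have "0 \<le> (\<Sum>i\<in>I. \<Sum>k\<in>I. S i k * b (u' i) (u' k))"
    using insert.IH[of u'] HI u'X by blast
  moreover have "0 \<le> q * (\<Sum>i\<in>insert j I. \<Sum>k\<in>insert j I. S i k * t i * t k)"
    using q0 insert.prems(1) by simp
  ultimately show ?case using eq by simp
qed

lemma trace_lower:
  fixes M :: "real^'n^'n"
  assumes bet: "\<And>x. \<beta> * (x \<bullet> x) \<le> x \<bullet> (M *v x)" and uX: "\<And>i. u i \<in> X"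
  shows "\<beta> * (\<Sum>i\<in>UNIV. b (u i) (u i)) \<le> (\<Sum>i\<in>UNIV. \<Sum>k\<in>UNIV. M$i$k * b (u i) (u k))"
proof -
  define S where "S = (\<lambda>i k. M$i$k - (if i = k then \<beta> else 0))"
  have delta: "(\<Sum>k\<in>UNIV. (if i = k then \<beta> else 0) * z k) = \<beta> * z i" for i and z :: "'n \<Rightarrow> real"
  proof -
    have "(\<Sum>k\<in>UNIV. (if i = k then \<beta> else 0) * z k) = (\<Sum>k\<in>UNIV. if i = k then \<beta> * z k else 0)"
      by (rule sum.cong) auto
    then show ?thesis by simp
  qed
  have split: "(\<Sum>i\<in>UNIV. \<Sum>k\<in>UNIV. S i k * g i k) = (\<Sum>i\<in>UNIV. \<Sum>k\<in>UNIV. M$i$k * g i k) - \<beta> * (\<Sum>i\<in>UNIV. g i i)"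
    for g :: "'n \<Rightarrow> 'n \<Rightarrow> real"
  proof -
    have "(\<Sum>i\<in>UNIV. \<Sum>k\<in>UNIV. S i k * g i k) = (\<Sum>i\<in>UNIV. (\<Sum>k\<in>UNIV. M$i$k * g i k) - (\<Sum>k\<in>UNIV. (if i = k then \<beta> else 0) * g i k))"
      unfolding S_def by (simp add: left_diff_distrib sum_subtractf)
    also have "\<dots> = (\<Sum>i\<in>UNIV. (\<Sum>k\<in>UNIV. M$i$k * g i k) - \<beta> * g i i)"
      using delta by simp
    finally show ?thesis by (simp add: sum_subtractf sum_distrib_left)
  qed
  have qf: "x \<bullet> (M *v x) = (\<Sum>i\<in>UNIV. \<Sum>k\<in>UNIV. M$i$k * x$i * x$k)" for x :: "real^'n"
    by (simp add: inner_vec_def matrix_vector_mult_def sum_distrib_left mult_ac)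
  have "0 \<le> (\<Sum>i\<in>UNIV. \<Sum>k\<in>UNIV. S i k * f i * f k)" for f :: "'n \<Rightarrow> real"
  proof -
    have "\<beta> * ((\<chi> i. f i) \<bullet> (\<chi> i. f i)) \<le> (\<chi> i. f i) \<bullet> (M *v (\<chi> i. f i))" by (rule bet)
    then have "\<beta> * (\<Sum>i\<in>UNIV. f i * f i) \<le> (\<Sum>i\<in>UNIV. \<Sum>k\<in>UNIV. M$i$k * f i * f k)"
      unfolding qf by (simp add: inner_vec_def)
    moreover have "(\<Sum>i\<in>UNIV. \<Sum>k\<in>UNIV. S i k * f i * f k)
       = (\<Sum>i\<in>UNIV. \<Sum>k\<in>UNIV. M$i$k * f i * f k) - \<beta> * (\<Sum>i\<in>UNIV. f i * f i)"
      using split[of "\<lambda>i k. f i * f k"] by (simp add: mult.assoc)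
    ultimately show ?thesis by simp
  qed
  then have "0 \<le> (\<Sum>i\<in>UNIV. \<Sum>k\<in>UNIV. S i k * b (u i) (u k))"
    using uX by (intro trace_psd) auto
  also have "(\<Sum>i\<in>UNIV. \<Sum>k\<in>UNIV. S i k * b (u i) (u k))
     = (\<Sum>i\<in>UNIV. \<Sum>k\<in>UNIV. M$i$k * b (u i) (u k)) - \<beta> * (\<Sum>i\<in>UNIV. b (u i) (u i))"
    by (rule split)
  finally show ?thesis by simp
qed

end

lemma pd_lower:
  fixes M :: "real^'n^'n"
  assumes pd: "\<forall>x. x \<noteq> 0 \<longrightarrow> x \<bullet> (M *v x) > 0"
  shows "\<exists>\<beta>>0. \<forall>x. \<beta> * (x \<bullet> x) \<le> x \<bullet> (M *v x)"
proof -
  define f where "f = (\<lambda>x::real^'n. x \<bullet> (M *v x))"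
  have cont: "continuous_on (sphere 0 1) f" unfolding f_def
    by (intro continuous_intros linear_continuous_on matrix_vector_mul_bounded_linear)
  obtain i :: 'n where True by blast
  have "(axis i (1::real) :: real^'n) \<in> sphere 0 1" by (simp add: norm_axis_1 sphere_def dist_norm)
  then have ne: "sphere (0::real^'n) 1 \<noteq> {}" by blast
  obtain x0 where x0: "x0 \<in> sphere 0 1" "\<forall>y\<in>sphere 0 1. f x0 \<le> f y"
    using continuous_attains_inf[OF compact_sphere ne cont] by blast
  have x0n: "x0 \<noteq> 0" using x0 by auto
  have bp: "f x0 > 0" using pd x0n f_def by simp
  have "f x0 * (x \<bullet> x) \<le> x \<bullet> (M *v x)" for x
  proof (cases "x = 0")
    case True then show ?thesis by simp
  next
    case False
    define y where "y = (1 / norm x) *\<^sub>R x"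
    have "y \<in> sphere 0 1" unfolding y_def using False by (simp add: sphere_def dist_norm)
    then have "f x0 \<le> f y" using x0 by blast
    also have "f y = (1 / norm x)^2 * (x \<bullet> (M *v x))" unfolding f_def y_def
      by (simp add: matrix_vector_mult_scaleR power2_eq_square)
    finally have "f x0 * (norm x)^2 \<le> x \<bullet> (M *v x)" using False
      by (simp add: field_simps)
    then show ?thesis by (simp add: power2_norm_eq_inner)
  qed
  then show ?thesis using bp by blast
qed




definition mv :: "real^'n^'n \<Rightarrow> ('n::finite \<Rightarrow> 'v::real_vector) \<Rightarrow> 'n \<Rightarrow> 'v" where
  "mv C u = (\<lambda>i. \<Sum>k\<in>UNIV. C$i$k *\<^sub>R u k)"

lemma mv_mult: "mv C (mv D u) = mv (C ** D) u"
proof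
  fix i
  have "mv C (mv D u) i = (\<Sum>k\<in>UNIV. \<Sum>m\<in>UNIV. (C$i$k * D$k$m) *\<^sub>R u m)"
    unfolding mv_def by (simp add: scaleR_sum_right mult.commute)
  also have "\<dots> = (\<Sum>m\<in>UNIV. \<Sum>k\<in>UNIV. (C$i$k * D$k$m) *\<^sub>R u m)" by (rule sum.swap)
  also have "\<dots> = mv (C ** D) u i"
    unfolding mv_def matrix_matrix_mult_def by (simp add: scaleR_sum_left)
  finally show "mv C (mv D u) i = mv (C ** D) u i" .
qed

lemma mv_id: "mv (mat 1) u = u"
proof
  fix i
  have "(\<Sum>k\<in>UNIV. (mat 1 :: real^'a^'a)$i$k *\<^sub>R u k) = (\<Sum>k\<in>UNIV. if k = i then u k else 0)"
    by (rule sum.cong) (auto simp: mat_def)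
  then show "mv (mat 1) u i = u i" unfolding mv_def by simp
qed

lemma mv_add: "mv C (\<lambda>i. u i + w i) = (\<lambda>i. mv C u i + mv C w i)"
  unfolding mv_def by (simp add: scaleR_add_right sum.distrib)
lemma mv_scale: "mv C (\<lambda>i. a *\<^sub>R u i) = (\<lambda>i. a *\<^sub>R mv C u i)"
  unfolding mv_def by (simp add: scaleR_sum_right mult.commute)

lemma pd_inj:
  fixes C :: "real^'n^'n"
  assumes pd: "\<forall>x. x \<noteq> 0 \<longrightarrow> x \<bullet> (C *v x) > 0"
  shows "\<exists>B. C ** B = mat 1"
proof -
  have "inj ((*v) C)"
  proof (rule injI)
    fix x y assume "C *v x = C *v y"
    then have "C *v (x - y) = 0" by (simp add: matrix_vector_mult_diff_distrib)
    then have "(x - y) \<bullet> (C *v (x - y)) = 0" by simp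
    show "x = y"
    proof (rule ccontr)
      assume "x \<noteq> y"
      then have "(x - y) \<bullet> (C *v (x - y)) > 0" using pd by simp
      then show False using \<open>(x - y) \<bullet> (C *v (x - y)) = 0\<close> by simp
    qed
  qed
  then obtain B where "B ** C = mat 1" using matrix_left_invertible_injective by blast
  then show ?thesis using matrix_left_right_inverse by blast
qed

definition goodmat :: "real^'n^'n \<Rightarrow> real^'n^'n \<Rightarrow> real \<Rightarrow> bool" where
  "goodmat M C \<alpha> \<longleftrightarrow> transpose C = C \<and> \<alpha> > 0 \<and> (\<exists>B. C ** B = mat 1)
     \<and> (\<forall>x. \<alpha> * (x \<bullet> x) \<le> x \<bullet> (C *v x)) \<and> (\<forall>x. \<alpha> * (x \<bullet> x) \<le> x \<bullet> ((C ** M) *v x))"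

lemma wpd_good: fixes M :: "real^'n^'n" assumes "weakly_pos_def M" shows "\<exists>C \<alpha>. goodmat M C \<alpha>"
proof -
  obtain C where C: "transpose C = C" "\<forall>x. x \<noteq> 0 \<longrightarrow> x \<bullet> (C *v x) > 0"
    "\<forall>x. x \<noteq> 0 \<longrightarrow> x \<bullet> ((C ** M) *v x) > 0" using assms unfolding weakly_pos_def_def by blast
  obtain a1 where a1: "a1 > 0" "\<forall>x. a1 * (x \<bullet> x) \<le> x \<bullet> (C *v x)" using pd_lower[OF C(2)] by blast
  obtain a2 where a2: "a2 > 0" "\<forall>x. a2 * (x \<bullet> x) \<le> x \<bullet> ((C ** M) *v x)" using pd_lower[OF C(3)] by blast
  have le: "min a1 a2 * (x \<bullet> x) \<le> a1 * (x \<bullet> x)" "min a1 a2 * (x \<bullet> x) \<le> a2 * (x \<bullet> x)" for x :: "real^'n"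
    by (simp_all add: mult_right_mono)
  have "goodmat M C (min a1 a2)" unfolding goodmat_def
  proof (intro conjI allI)
    show "transpose C = C" by (rule C(1))
    show "min a1 a2 > 0" using a1 a2 by simp
    show "\<exists>B. C ** B = mat 1" by (rule pd_inj[OF C(2)])
    fix x :: "real^'n"
    show "min a1 a2 * (x \<bullet> x) \<le> x \<bullet> (C *v x)" using le(1)[of x] a1(2) by (meson order_trans)
    show "min a1 a2 * (x \<bullet> x) \<le> x \<bullet> ((C ** M) *v x)" using le(2)[of x] a2(2) by (meson order_trans)
  qed
  then show ?thesis by blast
qed




definition KM :: "real^'n^'n \<Rightarrow> real" where
  "KM M = real CARD('n) + (\<Sum>i\<in>UNIV. \<Sum>j\<in>UNIV. \<bar>M$i$j\<bar>)"

lemma KM0: "KM M \<ge> 0" unfolding KM_def by (simp add: sum_nonneg)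

locale core =
  fixes l2 h1 :: "'v::real_vector \<Rightarrow> 'v \<Rightarrow> real" and W :: "'v set" and \<mu> :: nat and ht :: real
  assumes L: "psdf W l2" and H: "psdf W h1" and Lpos: "\<And>u. u \<in> W \<Longrightarrow> u \<noteq> 0 \<Longrightarrow> l2 u u > 0"
    and htp: "ht > 0" and Wc: "cmpl W (\<lambda>x y. l2 x y + ht^\<mu> * h1 x y)"
begin

sublocale L: psdf W l2 by (rule L)
sublocale H: psdf W h1 by (rule H)

definition Q where "Q x y = l2 x y + ht^\<mu> * h1 x y"

lemma c0: "ht^\<mu> > 0" using htp by simp

sublocale QQ: ips W Q
proof
  show "subspace W" by (rule L.sub)
  show "sym_bilinear_on W Q" unfolding sym_bilinear_on_def Q_def
    using L.symm H.symm L.addL H.addL L.scL H.scL by (simp add: algebra_simps)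
  show "\<And>u. u \<in> W \<Longrightarrow> 0 \<le> Q u u" unfolding Q_def using L.psd H.psd c0 by simp
  show "\<And>u. u \<in> W \<Longrightarrow> u \<noteq> 0 \<Longrightarrow> 0 < Q u u" unfolding Q_def using Lpos H.psd c0
    by (simp add: add_pos_nonneg)
qed

lemma Qc: "cmpl W Q" using Wc unfolding Q_def[abs_def] .

definition af :: "real^'n^'n \<Rightarrow> ('n::finite \<Rightarrow> 'v) \<Rightarrow> ('n \<Rightarrow> 'v) \<Rightarrow> real" where
  "af M u v = (\<Sum>i\<in>UNIV. l2 (u i) (v i)) + ht^\<mu> * (\<Sum>i\<in>UNIV. \<Sum>j\<in>UNIV. M$i$j * h1 (u j) (v i))"

lemma fo: "form_op l2 h1 \<mu> ht M W u = (\<lambda>v. if v \<in> vecs W then af M u v else 0)"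
  unfolding form_op_def af_def by simp

lemma nV: "normV l2 h1 \<mu> ht u = sqrt (\<Sum>i\<in>UNIV. Q (u i) (u i))"
  unfolding normV_def Q_def by simp

lemma vecsD: "u \<in> vecs W \<Longrightarrow> u i \<in> W" unfolding vecs_def by simp

lemma af_addL: "u \<in> vecs W \<Longrightarrow> w \<in> vecs W \<Longrightarrow> v \<in> vecs W \<Longrightarrow>
   af M (\<lambda>i. u i + w i) v = af M u v + af M w v"
  unfolding af_def by (simp add: vecsD L.addL H.addL sum.distrib algebra_simps)
lemma af_scL: "u \<in> vecs W \<Longrightarrow> v \<in> vecs W \<Longrightarrow> af M (\<lambda>i. a *\<^sub>R u i) v = a * af M u v"
  unfolding af_def by (simp add: vecsD L.scL H.scL sum_distrib_left algebra_simps)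
lemma af_addR: "u \<in> vecs W \<Longrightarrow> w \<in> vecs W \<Longrightarrow> v \<in> vecs W \<Longrightarrow>
   af M v (\<lambda>i. u i + w i) = af M v u + af M v w"
  unfolding af_def by (simp add: vecsD L.addR H.addR sum.distrib algebra_simps)
lemma af_scR: "u \<in> vecs W \<Longrightarrow> v \<in> vecs W \<Longrightarrow> af M v (\<lambda>i. a *\<^sub>R u i) = a * af M v u"
  unfolding af_def by (simp add: vecsD L.scR H.scR sum_distrib_left algebra_simps)
lemma af_diffL: "u \<in> vecs W \<Longrightarrow> w \<in> vecs W \<Longrightarrow> v \<in> vecs W \<Longrightarrow>
   af M (\<lambda>i. u i - w i) v = af M u v - af M w v"
  unfolding af_def by (simp add: vecsD L.diffL H.diffL sum_subtractf algebra_simps)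

lemma vecs_add: "u \<in> vecs W \<Longrightarrow> w \<in> vecs W \<Longrightarrow> (\<lambda>i. u i + w i) \<in> vecs W"
  unfolding vecs_def by (simp add: L.inX(1))
lemma vecs_sc: "u \<in> vecs W \<Longrightarrow> (\<lambda>i. a *\<^sub>R u i) \<in> vecs W"
  unfolding vecs_def by (simp add: L.inX(2))
lemma vecs_diff: "u \<in> vecs W \<Longrightarrow> w \<in> vecs W \<Longrightarrow> (\<lambda>i. u i - w i) \<in> vecs W"
  unfolding vecs_def by (simp add: L.inX(3))

lemma nQ: assumes "u \<in> vecs W" shows "sqrt (Q (u j) (u j)) \<le> normV l2 h1 \<mu> ht u"
proof -
  have "Q (u j) (u j) \<le> (\<Sum>i\<in>UNIV. Q (u i) (u i))"
    by (intro member_le_sum) (simp_all add: QQ.psd vecsD[OF assms])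
  then show ?thesis unfolding nV by simp
qed

lemma nV0: "u \<in> vecs W \<Longrightarrow> normV l2 h1 \<mu> ht u \<ge> 0" unfolding nV
  by (simp add: sum_nonneg QQ.psd vecsD)

lemma bl2: assumes "x \<in> W" "y \<in> W" shows "\<bar>l2 x y\<bar> \<le> sqrt (Q x x) * sqrt (Q y y)"
proof -
  have "\<bar>l2 x y\<bar> \<le> sqrt (l2 x x) * sqrt (l2 y y)" using L.cs_abs assms by blast
  also have "\<dots> \<le> sqrt (Q x x) * sqrt (Q y y)" unfolding Q_def using assms H.psd L.psd c0
    by (intro mult_mono) simp_all
  finally show ?thesis .
qed

lemma bh1: assumes "x \<in> W" "y \<in> W" shows "ht^\<mu> * \<bar>h1 x y\<bar> \<le> sqrt (Q x x) * sqrt (Q y y)"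
proof -
  have "ht^\<mu> * \<bar>h1 x y\<bar> \<le> ht^\<mu> * (sqrt (h1 x x) * sqrt (h1 y y))"
    using H.cs_abs assms c0 by (simp add: mult_left_mono)
  also have "\<dots> = sqrt (ht^\<mu> * h1 x x) * sqrt (ht^\<mu> * h1 y y)"
    using c0 by (simp add: real_sqrt_mult)
  also have "\<dots> \<le> sqrt (Q x x) * sqrt (Q y y)" unfolding Q_def using assms H.psd L.psd c0
    by (intro mult_mono) simp_all
  finally show ?thesis .
qed


lemma af_bound:
  fixes M :: "real^'n^'n"
  assumes u: "u \<in> vecs W" and v: "v \<in> vecs W"
  shows "\<bar>af M u v\<bar> \<le> KM M * normV l2 h1 \<mu> ht u * normV l2 h1 \<mu> ht v"
proof -
  let ?N = "normV l2 h1 \<mu> ht u * normV l2 h1 \<mu> ht v"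
  have t: "sqrt (Q (u j) (u j)) * sqrt (Q (v i) (v i)) \<le> ?N" for i j
    using nQ[OF u, of j] nQ[OF v, of i] nV0[OF u] QQ.psd[OF vecsD[OF v, of i]] by (intro mult_mono) simp_all
  have p1: "\<bar>\<Sum>i\<in>UNIV. l2 (u i) (v i)\<bar> \<le> real CARD('n) * ?N"
  proof -
    have "\<bar>\<Sum>i\<in>UNIV. l2 (u i) (v i)\<bar> \<le> (\<Sum>i\<in>UNIV. \<bar>l2 (u i) (v i)\<bar>)" by (rule sum_abs)
    also have "\<dots> \<le> (\<Sum>i\<in>(UNIV::'n set). ?N)"
    proof (intro sum_mono)
      fix i
      show "\<bar>l2 (u i) (v i)\<bar> \<le> ?N" using bl2[OF vecsD[OF u, of i] vecsD[OF v, of i]] t[of i i] by linarith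
    qed
    finally show ?thesis by simp
  qed
  have p2: "\<bar>ht^\<mu> * (\<Sum>i\<in>UNIV. \<Sum>j\<in>UNIV. M$i$j * h1 (u j) (v i))\<bar>
      \<le> (\<Sum>i\<in>UNIV. \<Sum>j\<in>UNIV. \<bar>M$i$j\<bar>) * ?N"
  proof -
    have "\<bar>ht^\<mu> * (\<Sum>i\<in>UNIV. \<Sum>j\<in>UNIV. M$i$j * h1 (u j) (v i))\<bar>
        = \<bar>\<Sum>i\<in>UNIV. \<Sum>j\<in>UNIV. M$i$j * (ht^\<mu> * h1 (u j) (v i))\<bar>"
      by (simp add: sum_distrib_left mult.left_commute)
    also have "\<dots> \<le> (\<Sum>i\<in>UNIV. \<bar>\<Sum>j\<in>UNIV. M$i$j * (ht^\<mu> * h1 (u j) (v i))\<bar>)" by (rule sum_abs)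
    also have "\<dots> \<le> (\<Sum>i\<in>UNIV. \<Sum>j\<in>UNIV. \<bar>M$i$j * (ht^\<mu> * h1 (u j) (v i))\<bar>)"
      by (intro sum_mono sum_abs)
    also have "\<dots> \<le> (\<Sum>i\<in>UNIV. \<Sum>j\<in>UNIV. \<bar>M$i$j\<bar> * ?N)"
    proof (intro sum_mono)
      fix i j
      have "ht^\<mu> * \<bar>h1 (u j) (v i)\<bar> \<le> ?N" using bh1[OF vecsD[OF u, of j] vecsD[OF v, of i]] t[of j i] by linarith
      then have "\<bar>M$i$j\<bar> * (ht^\<mu> * \<bar>h1 (u j) (v i)\<bar>) \<le> \<bar>M$i$j\<bar> * ?N" by (simp add: mult_left_mono)
      then show "\<bar>M$i$j * (ht^\<mu> * h1 (u j) (v i))\<bar> \<le> \<bar>M$i$j\<bar> * ?N"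
        using c0 by (simp add: abs_mult)
    qed
    also have "\<dots> = (\<Sum>i\<in>UNIV. \<Sum>j\<in>UNIV. \<bar>M$i$j\<bar>) * ?N" by (simp add: sum_distrib_right)
    finally show ?thesis .
  qed
  have "\<bar>af M u v\<bar> \<le> \<bar>\<Sum>i\<in>UNIV. l2 (u i) (v i)\<bar> + \<bar>ht^\<mu> * (\<Sum>i\<in>UNIV. \<Sum>j\<in>UNIV. M$i$j * h1 (u j) (v i))\<bar>"
    unfolding af_def by (rule abs_triangle_ineq)
  also have "\<dots> \<le> KM M * ?N" using p1 p2 unfolding KM_def by (simp add: algebra_simps)
  finally show ?thesis by (simp add: mult.assoc)
qed

end




definition GC :: "real^'n^'n \<Rightarrow> real" where
  "GC C = (\<Sum>i\<in>UNIV. \<Sum>k\<in>UNIV. \<Sum>m\<in>UNIV. \<bar>C$i$k\<bar> * \<bar>C$i$m\<bar>)"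

lemma GC0: "GC C \<ge> 0" unfolding GC_def by (simp add: sum_nonneg)

context psdf
begin

lemma bil_sum:
  assumes "finite I" "finite J" "\<And>k. x k \<in> X" "\<And>m. y m \<in> X"
  shows "b (\<Sum>k\<in>I. a k *\<^sub>R x k) (\<Sum>m\<in>J. c m *\<^sub>R y m) = (\<Sum>k\<in>I. \<Sum>m\<in>J. a k * c m * b (x k) (y m))"
proof -
  have yS: "(\<Sum>m\<in>J. c m *\<^sub>R y m) \<in> X" by (intro subspace_sum sub inX(2) assms(4))
  have "b (\<Sum>k\<in>I. a k *\<^sub>R x k) (\<Sum>m\<in>J. c m *\<^sub>R y m) = (\<Sum>k\<in>I. b (a k *\<^sub>R x k) (\<Sum>m\<in>J. c m *\<^sub>R y m))"
    using assms yS by (intro sumL) (simp_all add: inX(2))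
  also have "\<dots> = (\<Sum>k\<in>I. a k * (\<Sum>m\<in>J. b (x k) (c m *\<^sub>R y m)))"
    using assms yS by (simp add: scL sumR inX(2) sum_distrib_left)
  also have "\<dots> = (\<Sum>k\<in>I. \<Sum>m\<in>J. a k * c m * b (x k) (y m))"
    using assms by (simp add: scR sum_distrib_left mult.assoc)
  finally show ?thesis .
qed

end

context core
begin

lemma mv_in: "u \<in> vecs W \<Longrightarrow> mv C u \<in> vecs W"
  unfolding mv_def vecs_def using L.sub by (auto intro!: subspace_sum simp: L.inX(2))


lemma mv_bound:
  fixes C :: "real^'n^'n"
  assumes u: "u \<in> vecs W"
  shows "normV l2 h1 \<mu> ht (mv C u) \<le> sqrt (GC C) * normV l2 h1 \<mu> ht u"
proof -
  let ?N = "normV l2 h1 \<mu> ht u"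
  have N0: "?N \<ge> 0" by (rule nV0[OF u])
  have qb: "\<bar>Q (u k) (u m)\<bar> \<le> ?N^2" for k m
  proof -
    have "\<bar>Q (u k) (u m)\<bar> \<le> sqrt (Q (u k) (u k)) * sqrt (Q (u m) (u m))"
      using QQ.cs_abs vecsD[OF u] by blast
    also have "\<dots> \<le> ?N * ?N" using nQ[OF u] N0 QQ.psd[OF vecsD[OF u]] by (intro mult_mono) simp_all
    finally show ?thesis by (simp add: power2_eq_square)
  qed
  have "(\<Sum>i\<in>UNIV. Q (mv C u i) (mv C u i)) = (\<Sum>i\<in>UNIV. \<Sum>k\<in>UNIV. \<Sum>m\<in>UNIV. C$i$k * C$i$m * Q (u k) (u m))"
    unfolding mv_def using vecsD[OF u] by (simp add: QQ.bil_sum)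
  also have "\<dots> \<le> (\<Sum>i\<in>UNIV. \<Sum>k\<in>UNIV. \<Sum>m\<in>(UNIV::'n set). \<bar>C$i$k\<bar> * \<bar>C$i$m\<bar> * ?N^2)"
  proof (intro sum_mono)
    fix i k m
    have "C$i$k * C$i$m * Q (u k) (u m) \<le> \<bar>C$i$k * C$i$m * Q (u k) (u m)\<bar>" by simp
    also have "\<dots> = \<bar>C$i$k\<bar> * \<bar>C$i$m\<bar> * \<bar>Q (u k) (u m)\<bar>" by (simp add: abs_mult)
    also have "\<dots> \<le> \<bar>C$i$k\<bar> * \<bar>C$i$m\<bar> * ?N^2" using qb by (simp add: mult_left_mono)
    finally show "C$i$k * C$i$m * Q (u k) (u m) \<le> \<bar>C$i$k\<bar> * \<bar>C$i$m\<bar> * ?N^2" .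
  qed
  also have "\<dots> = GC C * ?N^2" unfolding GC_def by (simp add: sum_distrib_right)
  finally have "(\<Sum>i\<in>UNIV. Q (mv C u i) (mv C u i)) \<le> GC C * ?N^2" .
  then have "normV l2 h1 \<mu> ht (mv C u) \<le> sqrt (GC C * ?N^2)" unfolding nV[of "mv C u"] by simp
  also have "\<dots> = sqrt (GC C) * ?N" using N0 by (simp add: real_sqrt_mult)
  finally show ?thesis .
qed

lemma coer:
  fixes M C :: "real^'n^'n"
  assumes g: "goodmat M C \<alpha>" and u: "u \<in> vecs W"
  shows "\<alpha> * (normV l2 h1 \<mu> ht u)^2 \<le> af M u (mv C u)"
proof -
  have Cs: "C$k$i = C$i$k" for i k
  proof -
    have "transpose C = C" using g goodmat_def by blast
    then have "(transpose C)$i$k = C$i$k" by simp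
    then show ?thesis by (simp add: transpose_def)
  qed
  have b1: "\<forall>x. \<alpha> * (x \<bullet> x) \<le> x \<bullet> (C *v x)" and b2: "\<forall>x. \<alpha> * (x \<bullet> x) \<le> x \<bullet> ((C ** M) *v x)"
    using g goodmat_def by blast+
  have uW: "\<And>i. u i \<in> W" using vecsD[OF u] .
  have e1: "(\<Sum>i\<in>UNIV. l2 (u i) (mv C u i)) = (\<Sum>i\<in>UNIV. \<Sum>k\<in>UNIV. C$i$k * l2 (u i) (u k))"
    unfolding mv_def using uW by (simp add: L.sumR L.scR L.inX(2))
  have e2: "(\<Sum>i\<in>UNIV. \<Sum>j\<in>UNIV. M$i$j * h1 (u j) (mv C u i))
     = (\<Sum>i\<in>UNIV. \<Sum>j\<in>UNIV. (C ** M)$i$j * h1 (u i) (u j))"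
  proof -
    have "(\<Sum>i\<in>UNIV. \<Sum>j\<in>UNIV. M$i$j * h1 (u j) (mv C u i))
        = (\<Sum>i\<in>UNIV. \<Sum>j\<in>UNIV. \<Sum>k\<in>UNIV. M$i$j * C$i$k * h1 (u j) (u k))"
      unfolding mv_def using uW by (simp add: H.sumR H.scR H.inX(2) sum_distrib_left mult.assoc)
    also have "\<dots> = (\<Sum>j\<in>UNIV. \<Sum>i\<in>UNIV. \<Sum>k\<in>UNIV. M$i$j * C$i$k * h1 (u j) (u k))"
      by (rule sum.swap)
    also have "\<dots> = (\<Sum>j\<in>UNIV. \<Sum>k\<in>UNIV. \<Sum>i\<in>UNIV. M$i$j * C$i$k * h1 (u j) (u k))"
      by (rule sum.cong[OF refl], rule sum.swap)
    also have "\<dots> = (\<Sum>j\<in>UNIV. \<Sum>k\<in>UNIV. (C ** M)$k$j * h1 (u k) (u j))"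
    proof (intro sum.cong refl)
      fix j k
      have "(C ** M)$k$j * h1 (u k) (u j) = (\<Sum>i\<in>UNIV. C$k$i * M$i$j) * h1 (u j) (u k)"
        by (simp add: matrix_matrix_mult_def H.symm[OF uW uW])
      also have "\<dots> = (\<Sum>i\<in>UNIV. M$i$j * C$i$k * h1 (u j) (u k))"
        by (simp add: sum_distrib_right sum_distrib_left Cs[of k] mult.commute)
      finally show "(\<Sum>i\<in>UNIV. M$i$j * C$i$k * h1 (u j) (u k)) = (C ** M)$k$j * h1 (u k) (u j)" ..
    qed
    also have "\<dots> = (\<Sum>k\<in>UNIV. \<Sum>j\<in>UNIV. (C ** M)$k$j * h1 (u k) (u j))"
      by (rule sum.swap)
    finally show ?thesis .
  qed
  have t1: "\<alpha> * (\<Sum>i\<in>UNIV. l2 (u i) (u i)) \<le> (\<Sum>i\<in>UNIV. \<Sum>k\<in>UNIV. C$i$k * l2 (u i) (u k))"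
    using b1 uW by (intro L.trace_lower) auto
  have t2: "\<alpha> * (\<Sum>i\<in>UNIV. h1 (u i) (u i)) \<le> (\<Sum>i\<in>UNIV. \<Sum>j\<in>UNIV. (C ** M)$i$j * h1 (u i) (u j))"
    using b2 uW by (intro H.trace_lower) auto
  have "(normV l2 h1 \<mu> ht u)^2 = (\<Sum>i\<in>UNIV. l2 (u i) (u i)) + ht^\<mu> * (\<Sum>i\<in>UNIV. h1 (u i) (u i))"
  proof -
    have "0 \<le> (\<Sum>i\<in>UNIV. Q (u i) (u i))" using QQ.psd uW by (simp add: sum_nonneg)
    then have "(normV l2 h1 \<mu> ht u)^2 = (\<Sum>i\<in>UNIV. Q (u i) (u i))" unfolding nV by simp
    then show ?thesis by (simp add: Q_def sum.distrib sum_distrib_left)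
  qed
  then have "\<alpha> * (normV l2 h1 \<mu> ht u)^2 = \<alpha> * (\<Sum>i\<in>UNIV. l2 (u i) (u i)) + ht^\<mu> * (\<alpha> * (\<Sum>i\<in>UNIV. h1 (u i) (u i)))"
    by (simp add: algebra_simps)
  also have "\<dots> \<le> (\<Sum>i\<in>UNIV. \<Sum>k\<in>UNIV. C$i$k * l2 (u i) (u k))
      + ht^\<mu> * (\<Sum>i\<in>UNIV. \<Sum>j\<in>UNIV. (C ** M)$i$j * h1 (u i) (u j))"
    using t1 t2 c0 by (intro add_mono mult_left_mono) simp_all
  also have "\<dots> = af M u (mv C u)" unfolding af_def e1 e2 ..
  finally show ?thesis .
qed

end




lemma vnth_add: "vec_nth (x + y) = (\<lambda>i. x$i + y$i)" by (rule ext) simp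
lemma vnth_sc: "vec_nth (a *\<^sub>R x) = (\<lambda>i. a *\<^sub>R x$i)" by (rule ext) simp
lemma vnth_lam: "vec_nth (vec_lambda g) = g" by (rule ext) simp

context core
begin

lemma QQips: "ips W Q" by (rule QQ.ips_axioms)
lemma QQpsdf: "psdf W Q" by (rule QQ.psdf_axioms)

lemma XvD: "x \<in> Xv W \<Longrightarrow> vec_nth x \<in> vecs W" unfolding Xv_def vecs_def by simp
lemma XvI: "u \<in> vecs W \<Longrightarrow> vec_lambda u \<in> Xv W" unfolding Xv_def vecs_def by simp

lemma nV_vec: "normV l2 h1 \<mu> ht (vec_nth x) = sqrt (ipv Q x x)" unfolding nV ipv_def by simp

lemma op_add: "u \<in> vecs W \<Longrightarrow> w \<in> vecs W \<Longrightarrow>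
  form_op l2 h1 \<mu> ht M W (\<lambda>i. u i + w i) = (\<lambda>v. form_op l2 h1 \<mu> ht M W u v + form_op l2 h1 \<mu> ht M W w v)"
  unfolding fo by (rule ext) (simp add: af_addL)
lemma op_sc: "u \<in> vecs W \<Longrightarrow>
  form_op l2 h1 \<mu> ht M W (\<lambda>i. a *\<^sub>R u i) = (\<lambda>v. a * form_op l2 h1 \<mu> ht M W u v)"
  unfolding fo by (rule ext) (simp add: af_scL)

lemma op_dual: assumes u: "u \<in> vecs W" shows "form_op l2 h1 \<mu> ht M W u \<in> dual_space l2 h1 \<mu> ht W"
  unfolding dual_space_def
proof (intro CollectI conjI allI impI ballI)
  show "\<And>v. v \<notin> vecs W \<Longrightarrow> form_op l2 h1 \<mu> ht M W u v = 0" unfolding fo by simp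
  show "\<And>v w. v \<in> vecs W \<Longrightarrow> w \<in> vecs W \<Longrightarrow> form_op l2 h1 \<mu> ht M W u (\<lambda>i. v i + w i)
     = form_op l2 h1 \<mu> ht M W u v + form_op l2 h1 \<mu> ht M W u w"
    unfolding fo using u by (simp add: vecs_add af_addR)
  show "\<And>c v. v \<in> vecs W \<Longrightarrow> form_op l2 h1 \<mu> ht M W u (\<lambda>i. c *\<^sub>R v i) = c * form_op l2 h1 \<mu> ht M W u v"
    unfolding fo using u by (simp add: vecs_sc af_scR)
  show "\<exists>K. \<forall>v\<in>vecs W. \<bar>form_op l2 h1 \<mu> ht M W u v\<bar> \<le> K * normV l2 h1 \<mu> ht v"
    unfolding fo using af_bound[OF u] by (intro exI[of _ "KM M * normV l2 h1 \<mu> ht u"]) simp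
qed

lemma op_inj: assumes g: "goodmat M C \<alpha>" shows "inj_on (form_op l2 h1 \<mu> ht M W) (vecs W)"
proof (rule inj_onI)
  fix u w assume u: "u \<in> vecs W" and w: "w \<in> vecs W"
    and eq: "form_op l2 h1 \<mu> ht M W u = form_op l2 h1 \<mu> ht M W w"
  define d where "d = (\<lambda>i. u i - w i)"
  have d: "d \<in> vecs W" unfolding d_def using u w by (rule vecs_diff)
  have "af M u v = af M w v" if "v \<in> vecs W" for v
    using fun_cong[OF eq, of v] that unfolding fo by simp
  then have "af M d (mv C d) = 0" unfolding d_def using u w mv_in[OF d] by (simp add: af_diffL d_def)
  then have "\<alpha> * (normV l2 h1 \<mu> ht d)^2 \<le> 0" using coer[OF g d] by simp
  moreover have "\<alpha> > 0" using g goodmat_def by blast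
  ultimately have "(normV l2 h1 \<mu> ht d)^2 \<le> 0" by (simp add: mult_le_0_iff)
  then have n0: "normV l2 h1 \<mu> ht d = 0" by simp
  have dW: "\<And>i. d i \<in> W" using vecsD[OF d] .
  have "(\<Sum>i\<in>UNIV. Q (d i) (d i)) = 0"
  proof -
    have "0 \<le> (\<Sum>i\<in>UNIV. Q (d i) (d i))" using QQ.psd dW by (simp add: sum_nonneg)
    then show ?thesis using n0 unfolding nV by simp
  qed
  then have "\<forall>i\<in>UNIV. Q (d i) (d i) = 0" using QQ.psd dW by (subst (asm) sum_nonneg_eq_0_iff) auto
  then have "\<And>i. d i = 0" using QQ.zero_of dW by blast
  then show "u = w" unfolding d_def by (simp add: fun_eq_iff)
qed

lemma op_surj:
  fixes M C :: "real^'n^'n"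
  assumes g: "goodmat M C \<alpha>" and f: "f \<in> dual_space l2 h1 \<mu> ht W"
  shows "\<exists>u\<in>vecs W. form_op l2 h1 \<mu> ht M W u = f"
proof -
  interpret X: ips "Xv W :: ('v^'n) set" "ipv Q" by (rule ips_vec[OF QQips])
  have XC: "cmpl (Xv W :: ('v^'n) set) (ipv Q)" by (rule cmpl_vec[OF QQpsdf Qc])
  have al: "\<alpha> > 0" using g goodmat_def by blast
  obtain B where B: "C ** B = mat 1" using g goodmat_def by blast
  have f0: "\<And>v. v \<notin> vecs W \<Longrightarrow> f v = 0"
    and fadd: "\<And>v w. v \<in> vecs W \<Longrightarrow> w \<in> vecs W \<Longrightarrow> f (\<lambda>i. v i + w i) = f v + f w"
    and fsc: "\<And>c v. v \<in> vecs W \<Longrightarrow> f (\<lambda>i. c *\<^sub>R v i) = c * f v"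
    using f unfolding dual_space_def by blast+
  obtain K where K: "\<And>v. v \<in> vecs W \<Longrightarrow> \<bar>f v\<bar> \<le> K * normV l2 h1 \<mu> ht v"
    using f unfolding dual_space_def by blast
  define a' where "a' = (\<lambda>x y::'v^'n. af M (vec_nth x) (mv C (vec_nth y)))"
  define f' where "f' = (\<lambda>y::'v^'n. f (mv C (vec_nth y)))"
  have "\<exists>x\<in>Xv W. \<forall>y\<in>Xv W. a' x y = f' y"
  proof (rule X.lax_milgram[OF XC, where M = "KM M * sqrt (GC C)" and \<alpha> = \<alpha> and K = "max K 0 * sqrt (GC C)"])
    show "\<And>u v w. u \<in> Xv W \<Longrightarrow> v \<in> Xv W \<Longrightarrow> w \<in> Xv W \<Longrightarrow> a' (u + v) w = a' u w + a' v w"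
      unfolding a'_def vnth_add by (simp add: af_addL XvD mv_in)
    show "\<And>c u w. u \<in> Xv W \<Longrightarrow> w \<in> Xv W \<Longrightarrow> a' (c *\<^sub>R u) w = c * a' u w"
      unfolding a'_def vnth_sc by (simp add: af_scL XvD mv_in)
    show "\<And>u v w. u \<in> Xv W \<Longrightarrow> v \<in> Xv W \<Longrightarrow> w \<in> Xv W \<Longrightarrow> a' w (u + v) = a' w u + a' w v"
      unfolding a'_def vnth_add mv_add by (simp add: af_addR XvD mv_in)
    show "\<And>c u w. u \<in> Xv W \<Longrightarrow> w \<in> Xv W \<Longrightarrow> a' w (c *\<^sub>R u) = c * a' w u"
      unfolding a'_def vnth_sc mv_scale by (simp add: af_scR XvD mv_in)
    show "\<And>u v. u \<in> Xv W \<Longrightarrow> v \<in> Xv W \<Longrightarrow> \<bar>a' u v\<bar> \<le> KM M * sqrt (GC C) * sqrt (ipv Q u u) * sqrt (ipv Q v v)"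
    proof -
      fix u v :: "'v^'n" assume u: "u \<in> Xv W" and v: "v \<in> Xv W"
      have "\<bar>a' u v\<bar> \<le> KM M * normV l2 h1 \<mu> ht (vec_nth u) * normV l2 h1 \<mu> ht (mv C (vec_nth v))"
        unfolding a'_def by (rule af_bound[OF XvD[OF u] mv_in[OF XvD[OF v]]])
      also have "\<dots> \<le> KM M * normV l2 h1 \<mu> ht (vec_nth u) * (sqrt (GC C) * normV l2 h1 \<mu> ht (vec_nth v))"
        using mv_bound[OF XvD[OF v], of C] KM0[of M] nV0[OF XvD[OF u]]
        by (intro mult_left_mono) simp_all
      finally show "\<bar>a' u v\<bar> \<le> KM M * sqrt (GC C) * sqrt (ipv Q u u) * sqrt (ipv Q v v)"
        unfolding nV_vec by (simp add: mult_ac)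
    qed
    show "0 \<le> KM M * sqrt (GC C)" by (intro mult_nonneg_nonneg KM0 real_sqrt_ge_zero GC0)
    show "\<And>u. u \<in> Xv W \<Longrightarrow> \<alpha> * ipv Q u u \<le> a' u u"
    proof -
      fix u :: "'v^'n" assume u: "u \<in> Xv W"
      have "(normV l2 h1 \<mu> ht (vec_nth u))^2 = ipv Q u u" unfolding nV_vec using X.psd[OF u] by simp
      then show "\<alpha> * ipv Q u u \<le> a' u u" unfolding a'_def using coer[OF g XvD[OF u]] by simp
    qed
    show "0 < \<alpha>" by (rule al)
    show "\<And>v w. v \<in> Xv W \<Longrightarrow> w \<in> Xv W \<Longrightarrow> f' (v + w) = f' v + f' w"
      unfolding f'_def vnth_add mv_add by (simp add: fadd XvD mv_in)
    show "\<And>c v. v \<in> Xv W \<Longrightarrow> f' (c *\<^sub>R v) = c * f' v"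
      unfolding f'_def vnth_sc mv_scale by (simp add: fsc XvD mv_in)
    show "\<And>v. v \<in> Xv W \<Longrightarrow> \<bar>f' v\<bar> \<le> max K 0 * sqrt (GC C) * sqrt (ipv Q v v)"
    proof -
      fix v :: "'v^'n" assume v: "v \<in> Xv W"
      have m: "mv C (vec_nth v) \<in> vecs W" using mv_in XvD v by blast
      have "\<bar>f' v\<bar> \<le> K * normV l2 h1 \<mu> ht (mv C (vec_nth v))" unfolding f'_def using K[OF m] .
      also have "\<dots> \<le> max K 0 * normV l2 h1 \<mu> ht (mv C (vec_nth v))"
        using nV0[OF m] by (simp add: mult_right_mono)
      also have "\<dots> \<le> max K 0 * (sqrt (GC C) * normV l2 h1 \<mu> ht (vec_nth v))"
        using mv_bound[OF XvD[OF v], of C] by (intro mult_left_mono) simp_all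
      finally show "\<bar>f' v\<bar> \<le> max K 0 * sqrt (GC C) * sqrt (ipv Q v v)"
        unfolding nV_vec by (simp add: mult_ac)
    qed
  qed
  then obtain x0 where x0: "x0 \<in> Xv W" "\<And>y. y \<in> Xv W \<Longrightarrow> a' x0 y = f' y" by blast
  define u0 where "u0 = vec_nth x0"
  have u0: "u0 \<in> vecs W" unfolding u0_def using XvD x0(1) .
  have "form_op l2 h1 \<mu> ht M W u0 v = f v" for v
  proof (cases "v \<in> vecs W")
    case False then show ?thesis unfolding fo using f0 by simp
  next
    case True
    define y where "y = vec_lambda (mv B v)"
    have yX: "y \<in> Xv W" unfolding y_def using XvI mv_in True by blast
    have cb: "mv C (vec_nth y) = v" unfolding y_def vnth_lam mv_mult B mv_id ..
    have "af M u0 v = f v" using x0(2)[OF yX] unfolding a'_def f'_def cb u0_def .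
    then show ?thesis unfolding fo using True by simp
  qed
  then show ?thesis using u0 by (intro bexI[of _ u0]) (simp_all add: fun_eq_iff)
qed

lemma op_bij: assumes g: "goodmat M C \<alpha>"
  shows "bij_betw (form_op l2 h1 \<mu> ht M W) (vecs W) (dual_space l2 h1 \<mu> ht W)"
  unfolding bij_betw_def
proof
  show "inj_on (form_op l2 h1 \<mu> ht M W) (vecs W)" by (rule op_inj[OF g])
  show "form_op l2 h1 \<mu> ht M W ` vecs W = dual_space l2 h1 \<mu> ht W"
    using op_dual op_surj[OF g] by blast
qed

end




context core
begin

abbreviation "Op M \<equiv> form_op l2 h1 \<mu> ht M W"
abbreviation "DS \<equiv> dual_space l2 h1 \<mu> ht W"
abbreviation "NV \<equiv> normV l2 h1 \<mu> ht"

lemma comp_props: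
  fixes M1 M2 C1 C2 :: "real^'n^'n"
  assumes g1: "goodmat M1 C1 \<alpha>1" and g2: "goodmat M2 C2 \<alpha>2"
  defines "T \<equiv> the_inv_into (vecs W) (Op M2) \<circ> Op M1"
  shows "\<And>u. u \<in> vecs W \<Longrightarrow> T u \<in> vecs W \<and> Op M2 (T u) = Op M1 u"
    and "\<And>u v. u \<in> vecs W \<Longrightarrow> v \<in> vecs W \<Longrightarrow> T (\<lambda>i. u i + v i) = (\<lambda>i. T u i + T v i)"
    and "\<And>c u. u \<in> vecs W \<Longrightarrow> T (\<lambda>i. c *\<^sub>R u i) = (\<lambda>i. c *\<^sub>R T u i)"
    and "\<And>u. u \<in> vecs W \<Longrightarrow> NV (T u) \<le> (KM M1 * sqrt (GC C2) / \<alpha>2) * NV u"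
    and "bij_betw T (vecs W) (vecs W)"
proof -
  have b1: "bij_betw (Op M1) (vecs W) DS" by (rule op_bij[OF g1])
  have b2: "bij_betw (Op M2) (vecs W) DS" by (rule op_bij[OF g2])
  have i1: "inj_on (Op M1) (vecs W)" and im1: "Op M1 ` vecs W = DS" using b1 unfolding bij_betw_def by simp_all
  have i2: "inj_on (Op M2) (vecs W)" and im2: "Op M2 ` vecs W = DS" using b2 unfolding bij_betw_def by simp_all
  have al2: "\<alpha>2 > 0" using g2 unfolding goodmat_def by simp
  show A: "T u \<in> vecs W \<and> Op M2 (T u) = Op M1 u" if u: "u \<in> vecs W" for u
  proof -
    have m: "Op M1 u \<in> Op M2 ` vecs W" using op_dual[OF u] im2 by simp
    have t: "T u = the_inv_into (vecs W) (Op M2) (Op M1 u)" unfolding T_def by simp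
    show ?thesis unfolding t using the_inv_into_into[OF i2 m subset_refl] f_the_inv_into_f[OF i2 m] by simp
  qed
  show "T (\<lambda>i. u i + v i) = (\<lambda>i. T u i + T v i)" if u: "u \<in> vecs W" and v: "v \<in> vecs W" for u v
  proof (rule inj_onD[OF i2])
    have uv: "(\<lambda>i. u i + v i) \<in> vecs W" using vecs_add u v .
    have "Op M2 (T (\<lambda>i. u i + v i)) = Op M1 (\<lambda>i. u i + v i)" using A[OF uv] by simp
    also have "\<dots> = (\<lambda>z. Op M1 u z + Op M1 v z)" by (rule op_add[OF u v])
    also have "\<dots> = (\<lambda>z. Op M2 (T u) z + Op M2 (T v) z)" using A[OF u] A[OF v] by simp
    also have "\<dots> = Op M2 (\<lambda>i. T u i + T v i)" using A[OF u] A[OF v] op_add[of "T u" "T v" M2] by simp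
    finally show "Op M2 (T (\<lambda>i. u i + v i)) = Op M2 (\<lambda>i. T u i + T v i)" .
    show "T (\<lambda>i. u i + v i) \<in> vecs W" using A[OF uv] by blast
    show "(\<lambda>i. T u i + T v i) \<in> vecs W" using A[OF u] A[OF v] vecs_add by blast
  qed
  show "T (\<lambda>i. c *\<^sub>R u i) = (\<lambda>i. c *\<^sub>R T u i)" if u: "u \<in> vecs W" for c u
  proof (rule inj_onD[OF i2])
    have uv: "(\<lambda>i. c *\<^sub>R u i) \<in> vecs W" using vecs_sc u .
    have "Op M2 (T (\<lambda>i. c *\<^sub>R u i)) = Op M1 (\<lambda>i. c *\<^sub>R u i)" using A[OF uv] by simp
    also have "\<dots> = (\<lambda>z. c * Op M1 u z)" by (rule op_sc[OF u])
    also have "\<dots> = (\<lambda>z. c * Op M2 (T u) z)" using A[OF u] by simp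
    also have "\<dots> = Op M2 (\<lambda>i. c *\<^sub>R T u i)" using A[OF u] op_sc[of "T u" M2 c] by simp
    finally show "Op M2 (T (\<lambda>i. c *\<^sub>R u i)) = Op M2 (\<lambda>i. c *\<^sub>R T u i)" .
    show "T (\<lambda>i. c *\<^sub>R u i) \<in> vecs W" using A[OF uv] by blast
    show "(\<lambda>i. c *\<^sub>R T u i) \<in> vecs W" using A[OF u] vecs_sc by blast
  qed
  show "NV (T u) \<le> (KM M1 * sqrt (GC C2) / \<alpha>2) * NV u" if u: "u \<in> vecs W" for u
  proof -
    define w where "w = T u"
    have w: "w \<in> vecs W" "Op M2 w = Op M1 u" using A[OF u] w_def by auto
    have cw: "mv C2 w \<in> vecs W" using mv_in w(1) .
    have "\<alpha>2 * (NV w)^2 \<le> af M2 w (mv C2 w)" by (rule coer[OF g2 w(1)])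
    also have "af M2 w (mv C2 w) = af M1 u (mv C2 w)"
      using fun_cong[OF w(2), of "mv C2 w"] cw unfolding fo by simp
    also have "\<dots> \<le> KM M1 * NV u * NV (mv C2 w)" using af_bound[OF u cw, of M1] by linarith
    also have "\<dots> \<le> KM M1 * NV u * (sqrt (GC C2) * NV w)"
      using mv_bound[OF w(1), of C2] KM0[of M1] nV0[OF u] by (intro mult_left_mono) simp_all
    finally have h: "\<alpha>2 * (NV w)^2 \<le> (KM M1 * sqrt (GC C2) * NV u) * NV w" by (simp add: mult_ac)
    show ?thesis
    proof (cases "NV w = 0")
      case True
      then show ?thesis using w_def KM0[of M1] GC0[of C2] nV0[OF u] al2 by simp
    next
      case False
      then have wp: "NV w > 0" using nV0[OF w(1)] by simp
      have "\<alpha>2 * NV w * NV w \<le> (KM M1 * sqrt (GC C2) * NV u) * NV w" using h by (simp add: power2_eq_square mult.assoc)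
      then have "\<alpha>2 * NV w \<le> KM M1 * sqrt (GC C2) * NV u" using wp by simp
      then show ?thesis unfolding w_def using al2 by (simp add: field_simps)
    qed
  qed
  show "bij_betw T (vecs W) (vecs W)" unfolding bij_betw_def
  proof
    show "inj_on T (vecs W)"
    proof (rule inj_onI)
      fix u v :: "'n \<Rightarrow> 'v" assume u: "u \<in> vecs W" and v: "v \<in> vecs W" and e: "T u = T v"
      have "Op M1 u = Op M2 (T u)" using A[OF u] by simp
      also have "\<dots> = Op M2 (T v)" using e by simp
      also have "\<dots> = Op M1 v" using A[OF v] by simp
      finally have "Op M1 u = Op M1 v" .
      then show "u = v" by (rule inj_onD[OF i1 _ u v])
    qed
    show "T ` vecs W = vecs W"
    proof
      show "T ` vecs W \<subseteq> vecs W" by (rule image_subsetI) (rule conjunct1[OF A])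
      show "vecs W \<subseteq> T ` vecs W"
      proof
        fix w :: "'n \<Rightarrow> 'v" assume w: "w \<in> vecs W"
        have "Op M2 w \<in> Op M1 ` vecs W" using op_dual[OF w] im1 by simp
        then obtain u where u: "u \<in> vecs W" "Op M1 u = Op M2 w" by (auto simp del: image_iff elim!: imageE)
        have "T u = w" unfolding T_def o_def u(2) using the_inv_into_f_f[OF i2 w] .
        then show "w \<in> T ` vecs W" using u(1) by (rule image_eqI[OF sym])
      qed
    qed
  qed
qed

end




context core
begin

lemma opn:
  assumes "\<And>v. v \<in> vecs W \<Longrightarrow> NV (T v) \<le> K * NV v" "K \<ge> 0"
  shows "op_norm l2 h1 \<mu> ht W T \<le> K" "op_norm l2 h1 \<mu> ht W T \<ge> 0"
proof -
  define S where "S = {K. 0 \<le> K \<and> (\<forall>v\<in>vecs W. NV (T v) \<le> K * NV v)}"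
  have KS: "K \<in> S" unfolding S_def using assms by blast
  have bdd: "bdd_below S" unfolding S_def by (rule bdd_belowI[of _ 0]) blast
  show "op_norm l2 h1 \<mu> ht W T \<le> K" unfolding op_norm_def S_def[symmetric]
    by (rule cInf_lower[OF KS bdd])
  show "op_norm l2 h1 \<mu> ht W T \<ge> 0" unfolding op_norm_def S_def[symmetric]
    using KS by (intro cInf_greatest) (auto simp: S_def)
qed

lemma core_bound:
  fixes A P CA CP :: "real^'n^'n"
  assumes gA: "goodmat A CA \<alpha>A" and gP: "goodmat P CP \<alpha>P"
  shows "precond_bound l2 h1 \<mu> ht A P W ((KM A * sqrt (GC CP) / \<alpha>P) * (KM P * sqrt (GC CA) / \<alpha>A))"
proof -
  define TA where "TA = the_inv_into (vecs W) (Op P) \<circ> Op A"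
  define TB where "TB = the_inv_into (vecs W) (Op A) \<circ> Op P"
  note a = comp_props[OF gA gP, folded TA_def]
  note b = comp_props[OF gP gA, folded TB_def]
  have aA: "\<alpha>A > 0" using gA unfolding goodmat_def by simp
  have aP: "\<alpha>P > 0" using gP unfolding goodmat_def by simp
  have K1: "KM A * sqrt (GC CP) / \<alpha>P \<ge> 0" using KM0[of A] GC0[of CP] aP by simp
  have K2: "KM P * sqrt (GC CA) / \<alpha>A \<ge> 0" using KM0[of P] GC0[of CA] aA by simp
  have bA: "bounded_op l2 h1 \<mu> ht W TA" unfolding bounded_op_def
  proof (intro conjI ballI allI)
    show "TA ` vecs W \<subseteq> vecs W" by (rule image_subsetI) (rule conjunct1[OF a(1)])
    show "\<And>v w. v \<in> vecs W \<Longrightarrow> w \<in> vecs W \<Longrightarrow> TA (\<lambda>i. v i + w i) = (\<lambda>i. TA v i + TA w i)" by (rule a(2))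
    show "\<And>c v. v \<in> vecs W \<Longrightarrow> TA (\<lambda>i. c *\<^sub>R v i) = (\<lambda>i. c *\<^sub>R TA v i)" by (rule a(3))
    show "\<exists>K. \<forall>v\<in>vecs W. NV (TA v) \<le> K * NV v" using a(4) by blast
  qed
  have bB: "bounded_op l2 h1 \<mu> ht W TB" unfolding bounded_op_def
  proof (intro conjI ballI allI)
    show "TB ` vecs W \<subseteq> vecs W" by (rule image_subsetI) (rule conjunct1[OF b(1)])
    show "\<And>v w. v \<in> vecs W \<Longrightarrow> w \<in> vecs W \<Longrightarrow> TB (\<lambda>i. v i + w i) = (\<lambda>i. TB v i + TB w i)" by (rule b(2))
    show "\<And>c v. v \<in> vecs W \<Longrightarrow> TB (\<lambda>i. c *\<^sub>R v i) = (\<lambda>i. c *\<^sub>R TB v i)" by (rule b(3))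
    show "\<exists>K. \<forall>v\<in>vecs W. NV (TB v) \<le> K * NV v" using b(4) by blast
  qed
  have inv: "TB (TA u) = u" if u: "u \<in> vecs W" for u
  proof -
    have "TB (TA u) = the_inv_into (vecs W) (Op A) (Op P (TA u))" unfolding TB_def by simp
    also have "Op P (TA u) = Op A u" using a(1)[OF u] by simp
    also have "the_inv_into (vecs W) (Op A) (Op A u) = u" by (rule the_inv_into_f_f[OF op_inj[OF gA] u])
    finally show ?thesis .
  qed
  have n1: "op_norm l2 h1 \<mu> ht W TA \<le> KM A * sqrt (GC CP) / \<alpha>P" "op_norm l2 h1 \<mu> ht W TA \<ge> 0"
    using opn[OF a(4) K1] by blast+
  have n2: "op_norm l2 h1 \<mu> ht W TB \<le> KM P * sqrt (GC CA) / \<alpha>A" "op_norm l2 h1 \<mu> ht W TB \<ge> 0"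
    using opn[OF b(4) K2] by blast+
  have prod: "op_norm l2 h1 \<mu> ht W TA * op_norm l2 h1 \<mu> ht W TB
     \<le> (KM A * sqrt (GC CP) / \<alpha>P) * (KM P * sqrt (GC CA) / \<alpha>A)"
    using n1 n2 K1 by (intro mult_mono) simp_all
  show ?thesis unfolding precond_bound_def Let_def TA_def[symmetric] TB_def[symmetric]
    using op_bij[OF gA] op_bij[OF gP] a(5) bA bB inv prod by blast
qed

end




lemma psdf_sub: assumes "psdf V b" "subspace W" "W \<subseteq> V" shows "psdf W b"
proof -
  interpret psdf V b by fact
  show ?thesis
  proof
    show "subspace W" by fact
    show "sym_bilinear_on W b" using sb assms(3) unfolding sym_bilinear_on_def by blast
    show "\<And>u. u \<in> W \<Longrightarrow> 0 \<le> b u u" using psd assms(3) by blast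
  qed
qed

lemma energy_core:
  assumes E: "energy_space V l2 h1" and ht: "ht > 0"
  shows "core l2 h1 V \<mu> ht"
proof -
  have sub: "subspace V" and sl: "sym_bilinear_on V l2" and sh: "sym_bilinear_on V h1"
    and lp: "\<And>u. u \<in> V \<Longrightarrow> u \<noteq> 0 \<Longrightarrow> l2 u u > 0" and hp: "\<And>u. u \<in> V \<Longrightarrow> h1 u u \<ge> 0"
    using E unfolding energy_space_def by blast+
  have C1: "cmpl V (\<lambda>x y. l2 x y + h1 x y)" using E unfolding energy_space_def cmpl_def by blast
  have l0: "l2 0 0 = 0"
  proof -
    have "l2 (0 *\<^sub>R 0) 0 = 0 * l2 0 0" using sl sub subspace_0 unfolding sym_bilinear_on_def by blast
    then show ?thesis by simp
  qed
  have L: "psdf V l2"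
  proof
    show "subspace V" "sym_bilinear_on V l2" by (fact sub, fact sl)
    show "\<And>u. u \<in> V \<Longrightarrow> 0 \<le> l2 u u" using lp l0 by (metis less_eq_real_def)
  qed
  have H: "psdf V h1" using sub sh hp by unfold_locales
  define c where "c = ht^\<mu>"
  have c0: "c > 0" unfolding c_def using ht by simp
  have Wc: "cmpl V (\<lambda>x y. l2 x y + c * h1 x y)"
  proof (rule cmpl_equiv[OF sub _ _ _ _ C1, where m = "min 1 c" and K = "max 1 c"])
    show "\<And>x. x \<in> V \<Longrightarrow> 0 \<le> l2 x x + h1 x x" using L hp psdf.psd by (metis add_nonneg_nonneg)
    show "\<And>x. x \<in> V \<Longrightarrow> min 1 c * (l2 x x + h1 x x) \<le> l2 x x + c * h1 x x"
    proof -
      fix x assume x: "x \<in> V"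
      have a: "0 \<le> l2 x x" "0 \<le> h1 x x" using psdf.psd[OF L x] hp[OF x] by auto
      have "min 1 c * l2 x x \<le> l2 x x" using a c0 by (simp add: min_def mult_left_le_one_le)
      moreover have "min 1 c * h1 x x \<le> c * h1 x x" using a by (simp add: mult_right_mono)
      ultimately show "min 1 c * (l2 x x + h1 x x) \<le> l2 x x + c * h1 x x" by (simp add: algebra_simps)
    qed
    show "\<And>x. x \<in> V \<Longrightarrow> l2 x x + c * h1 x x \<le> max 1 c * (l2 x x + h1 x x)"
    proof -
      fix x assume x: "x \<in> V"
      have a: "0 \<le> l2 x x" "0 \<le> h1 x x" using psdf.psd[OF L x] hp[OF x] by auto
      have "1 * l2 x x \<le> max 1 c * l2 x x" by (rule mult_right_mono) (simp_all add: a)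
      then have "l2 x x \<le> max 1 c * l2 x x" by simp
      moreover have "c * h1 x x \<le> max 1 c * h1 x x" using a by (simp add: mult_right_mono)
      ultimately show "l2 x x + c * h1 x x \<le> max 1 c * (l2 x x + h1 x x)" by (simp add: algebra_simps)
    qed
    show "0 < min 1 c" using c0 by simp
  qed
  show ?thesis unfolding core_def using L H lp ht Wc c_def by blast
qed

lemma sub_core:
  assumes co: "core l2 h1 V \<mu> ht" and Vh: "subspace Vh" "Vh \<subseteq> V" and B: "finite B" "Vh = span B"
  shows "core l2 h1 Vh \<mu> ht"
proof -
  interpret core l2 h1 V \<mu> ht by (rule co)
  have BV: "B \<subseteq> V" using B Vh span_superset by blast
  have "cmpl (span B) Q" by (rule QQ.cmpl_span[OF B(1) BV])
  then have Wc: "cmpl Vh (\<lambda>x y. l2 x y + ht^\<mu> * h1 x y)" using B(2) unfolding Q_def[abs_def] by simp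
  show ?thesis unfolding core_def
    using psdf_sub[OF L Vh] psdf_sub[OF H Vh] Lpos Vh(2) htp Wc by blast
qed

theorem mainTheorem2:
  fixes A P :: "real^'n::finite^'n"
  assumes "weakly_pos_def A" and "weakly_pos_def P"
  shows "\<exists>C::real. \<forall>(V::'v::real_vector set) l2 h1 (\<mu>::nat) (ht::real).
           energy_space V l2 h1 \<and> \<mu> \<in> {1, 2} \<and> ht > 0 \<longrightarrow>
             precond_bound l2 h1 \<mu> ht A P V C
           \<and> (\<forall>Vh. subspace Vh \<and> Vh \<subseteq> V \<and> (\<exists>B. finite B \<and> Vh = span B) \<longrightarrow>
                 precond_bound l2 h1 \<mu> ht A P Vh C)"
proof -
  obtain CA \<alpha>A where gA: "goodmat A CA \<alpha>A" using wpd_good[OF assms(1)] by blast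
  obtain CP \<alpha>P where gP: "goodmat P CP \<alpha>P" using wpd_good[OF assms(2)] by blast
  define C where "C = (KM A * sqrt (GC CP) / \<alpha>P) * (KM P * sqrt (GC CA) / \<alpha>A)"
  have main: "precond_bound l2 h1 \<mu> ht A P W C" if "core l2 h1 W \<mu> ht" for l2 h1 :: "'v \<Rightarrow> 'v \<Rightarrow> real" and W \<mu> ht
  proof -
    interpret core l2 h1 W \<mu> ht by (rule that)
    have "precond_bound l2 h1 \<mu> ht A P W ((KM A * sqrt (GC CP) / \<alpha>P) * (KM P * sqrt (GC CA) / \<alpha>A))"
      by (rule core_bound[OF gA gP])
    then show ?thesis unfolding C_def .
  qed
  show ?thesis
  proof (intro exI[of _ C] allI impI)
    fix V :: "'v set" and l2 h1 and \<mu> :: nat and ht :: real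
    assume h: "energy_space V l2 h1 \<and> \<mu> \<in> {1, 2} \<and> ht > 0"
    have co: "core l2 h1 V \<mu> ht" using energy_core h by blast
    have "precond_bound l2 h1 \<mu> ht A P V C" by (rule main[OF co])
    moreover have "\<forall>Vh. subspace Vh \<and> Vh \<subseteq> V \<and> (\<exists>B. finite B \<and> Vh = span B) \<longrightarrow> precond_bound l2 h1 \<mu> ht A P Vh C"
    proof (intro allI impI)
      fix Vh assume "subspace Vh \<and> Vh \<subseteq> V \<and> (\<exists>B. finite B \<and> Vh = span B)"
      then obtain B where "subspace Vh" "Vh \<subseteq> V" "finite B" "Vh = span B" by blast
      then show "precond_bound l2 h1 \<mu> ht A P Vh C" using sub_core[OF co] main by blast
    qed
    ultimately show "precond_bound l2 h1 \<mu> ht A P V C \<and> (\<forall>Vh. subspace Vh \<and> Vh \<subseteq> V \<and> (\<exists>B. finite B \<and> Vh = span B) \<longrightarrow> precond_bound l2 h1 \<mu> ht A P Vh C)" ..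
  qed
qed


end
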